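(* Let $G$ be a finite simple graph on vertex set $\{1,\dots,n\}$ and let $\mathcal{S}=(S_1,\dots,S_n)$ and $\mathcal{S}'=(S'_1,\dots,S'_n)$ be any two realizations of $G$ by Pauli strings (possibly of different lengths). Then $$\mathrm{Conv}\big(\downarrow \mathcal{Q}(\mathcal{S})\big)\cap\mathbb{R}^n_{\ge0}=\mathrm{Conv}\big(\downarrow \mathcal{Q}(\mathcal{S}')\big)\cap\mathbb{R}^n_{\ge0}.$$ Denoting this common set by $\operatorname{BETA}(G)$, one has, for every $w\in\mathbb{R}^n_{\ge0}$, $$\beta(G,w)=\max_{v\in\operatorname{BETA}(G)}\sum_{i=1}^n w_iv_i .$$
   Context: A Pauli string of length $\ell$ is a tensor product $P_1\otimes\cdots\otimes P_\ell$ with each $P_k\in\{I,X,Y,Z\}$ (the $2\times 2$ identity and Pauli matrices); any two Pauli strings either commute or anticommute. A realization of a graph $G$ on vertex set $\{1,\dots,n\}$ is a tuple $(S_1,\dots,S_n)$ of Pauli strings of a common length with $S_iS_j=-S_jS_i$ if $i,j$ are adjacent in $G$ and $S_iS_j=S_jS_i$ otherwise ($G$ is then called the frustration graph of the tuple). For a density matrix $\rho$ write $\langle A\rangle_\rho=\operatorname{tr}(\rho A)$. For a realization $\mathcal{S}$, $\mathcal{Q}(\mathcal{S})=\{(\langle S_1\rangle_\rho^2,\dots,\langle S_n\rangle_\rho^2):\rho \text{ a density matrix}\}\subseteq\mathbb{R}^n$. For $T\subseteq\mathbb{R}^n$, $\downarrow T=\{x\in\mathbb{R}^n:\exists y\in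 T,\ x_i\le y_i\ \forall i\}$, and $\mathrm{Conv}$ denotes convex hull. The weighted beta number is $\beta(G,w)=\sup_\rho\sum_i w_i\langle S_i\rangle_\rho^2$ (supremum over density matrices) for a realization $(S_i)$ of $G$; it is known that this value does not depend on the choice of realization, and every finite simple graph has a realization. *)

theory Defs
  imports "HOL-Analysis.Analysis" "Jordan_Normal_Form.Matrix"
begin

datatype pauli = PI | PX | PY | PZ

fun pauli_entry :: "pauli \<Rightarrow> nat \<Rightarrow> nat \<Rightarrow> complex" where
  "pauli_entry PI r c = (if r = c then 1 else 0)"
| "pauli_entry PX r c = (if r \<noteq> c then 1 else 0)"
| "pauli_entry PY r c = (if r = 0 \<and> c = 1 then - \<i> else if r = 1 \<and> c = 0 then \<i> else 0)"
| "pauli_entry PZ r c = (if r = c then (if r = 0 then 1 else -1) else 0)"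

text \<open>The Kronecker product is written out entrywise:
  factor k (0-based) acts on bit (l-1-k) of the row/column index (so P_1 is the
  most significant tensor factor).\<close>
definition bitk :: "nat \<Rightarrow> nat \<Rightarrow> nat \<Rightarrow> nat" where
  "bitk l k r = (r div 2 ^ (l - 1 - k)) mod 2"

definition pauli_string_mat :: "pauli list \<Rightarrow> complex mat" where
  "pauli_string_mat ps =
     (let l = length ps in
      mat (2 ^ l) (2 ^ l)
        (\<lambda>(r, c). \<Prod>k<l. pauli_entry (ps ! k) (bitk l k r) (bitk l k c)))"

definition mat_trace :: "complex mat \<Rightarrow> complex" where
  "mat_trace A = (\<Sum>i<dim_row A. A $$ (i, i))"

definition density_matrix :: "nat \<Rightarrow> complex mat \<Rightarrow> bool" where
  "density_matrix d \<rho> \<longleftrightarrow>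
     \<rho> \<in> carrier_mat d d \<and>
     (\<forall>i<d. \<forall>j<d. \<rho> $$ (i, j) = cnj (\<rho> $$ (j, i))) \<and>
     (\<forall>v :: nat \<Rightarrow> complex.
        let q = (\<Sum>i<d. \<Sum>j<d. cnj (v i) * \<rho> $$ (i, j) * v j)
        in Im q = 0 \<and> Re q \<ge> 0) \<and>
     mat_trace \<rho> = 1"

text \<open>Expectation value tr(rho A); for Hermitian A (e.g. a Pauli string) and a
  density matrix rho this is a real number, and we take its real part.\<close>
definition expect :: "complex mat \<Rightarrow> complex mat \<Rightarrow> real" where
  "expect \<rho> A = Re (mat_trace (\<rho> * A))"

definition simple_graph :: "('n \<Rightarrow> 'n \<Rightarrow> bool) \<Rightarrow> bool" where
  "simple_graph G \<longleftrightarrow> (\<forall>i j. G i j \<longrightarrow> G j i) \<and> (\<forall>i. \<not> G i i)"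

definition realization :: "('n \<Rightarrow> 'n \<Rightarrow> bool) \<Rightarrow> ('n \<Rightarrow> pauli list) \<Rightarrow> bool" where
  "realization G S \<longleftrightarrow>
     (\<exists>l. \<forall>i. length (S i) = l) \<and>
     (\<forall>i j. (G i j \<longrightarrow>
               pauli_string_mat (S i) * pauli_string_mat (S j)
                 = - (pauli_string_mat (S j) * pauli_string_mat (S i))) \<and>
            (\<not> G i j \<longrightarrow>
               pauli_string_mat (S i) * pauli_string_mat (S j)
                 = pauli_string_mat (S j) * pauli_string_mat (S i)))"

definition Qset :: "('n::finite \<Rightarrow> pauli list) \<Rightarrow> (real ^ 'n) set" where
  "Qset S = {x. \<exists>\<rho>. (\<forall>i. density_matrix (2 ^ length (S i)) \<rho>) \<and>
                    (\<forall>i. x $ i = (expect \<rho> (pauli_string_mat (S i)))\<^sup>2)}"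

definition down_closure :: "(real ^ 'n) set \<Rightarrow> (real ^ 'n) set" where
  "down_closure T = {x. \<exists>y\<in>T. \<forall>i. x $ i \<le> y $ i}"

definition nonneg_orthant :: "(real ^ 'n) set" where
  "nonneg_orthant = {x. \<forall>i. 0 \<le> x $ i}"

definition BETA_of :: "('n::finite \<Rightarrow> pauli list) \<Rightarrow> (real ^ 'n) set" where
  "BETA_of S = convex hull (down_closure (Qset S)) \<inter> nonneg_orthant"

definition beta_num :: "('n::finite \<Rightarrow> 'n \<Rightarrow> bool) \<Rightarrow> (real ^ 'n) \<Rightarrow> real" where
  "beta_num G w =
     (let S = (SOME S. realization G S) in
      Sup {\<Sum>i\<in>UNIV. w $ i * (expect \<rho> (pauli_string_mat (S i)))\<^sup>2 | \<rho>.
             \<forall>i. density_matrix (2 ^ length (S i)) \<rho>})"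

end

theory Submission
  imports Defs
begin


definition kron :: "complex mat \<Rightarrow> complex mat \<Rightarrow> complex mat" where
  "kron A B = mat (dim_row A * dim_row B) (dim_col A * dim_col B)
     (\<lambda>(i,j). A $$ (i div dim_row B, j div dim_col B) * B $$ (i mod dim_row B, j mod dim_col B))"

lemma kron_carrier[simp]: "dim_row (kron A B) = dim_row A * dim_row B" "dim_col (kron A B) = dim_col A * dim_col B"
  by (auto simp: kron_def)

lemma kron_index[simp]: "i < dim_row A * dim_row B \<Longrightarrow> j < dim_col A * dim_col B \<Longrightarrow>
  kron A B $$ (i,j) = A $$ (i div dim_row B, j div dim_col B) * B $$ (i mod dim_row B, j mod dim_col B)"
  by (auto simp: kron_def)

lemma sum_div_mod: "(\<Sum>k<m*n. f k) = (\<Sum>s<m. \<Sum>t<n. f (s*n+t::nat))"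
proof (induction m)
  case 0 then show ?case by simp
next
  case (Suc m)
  have "{..<Suc m * n} = {..<m*n} \<union> {m*n..<m*n+n}" by auto
  then have "(\<Sum>k<Suc m*n. f k) = (\<Sum>k<m*n. f k) + (\<Sum>k\<in>{m*n..<m*n+n}. f k)"
    by (simp add: sum.union_disjoint ivl_disj_int)
  also have "(\<Sum>k\<in>{m*n..<m*n+n}. f k) = (\<Sum>t<n. f (m*n+t))"
  proof -
    have "sum f {0 + m*n..<n + m*n} = (\<Sum>t\<in>{0..<n}. f (t + m*n))" by (rule sum.shift_bounds_nat_ivl)
    then show ?thesis by (simp add: atLeast0LessThan add.commute)
  qed
  finally show ?case using Suc by simp
qed

lemma kron_mult:
  assumes "A \<in> carrier_mat m n" "C \<in> carrier_mat n p" "B \<in> carrier_mat m' n'" "D \<in> carrier_mat n' p'"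
  shows "kron A B * kron C D = kron (A*C) (B*D)"
proof (rule eq_matI)
  fix i j assume i: "i < dim_row (kron (A*C) (B*D))" and j: "j < dim_col (kron (A*C) (B*D))"
  have i': "i < m*m'" and j': "j < p*p'" using i j assms by auto
  have m'0: "m' > 0" and p'0: "p' > 0" using i' j' by (auto intro!: Nat.gr0I)
  have idm: "i div m' < m" "i mod m' < m'" using i' m'0 by (auto simp: less_mult_imp_div_less)
  have jdp: "j div p' < p" "j mod p' < p'" using j' p'0 by (auto simp: less_mult_imp_div_less)
  have "(kron A B * kron C D) $$ (i,j) = (\<Sum>k<n*n'. kron A B $$ (i,k) * kron C D $$ (k,j))"
    using assms i' j' by (simp add: scalar_prod_def atLeast0LessThan)
  also have "\<dots> = (\<Sum>s<n. \<Sum>t<n'. kron A B $$ (i,s*n'+t) * kron C D $$ (s*n'+t,j))"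
    by (rule sum_div_mod)
  also have "\<dots> = (\<Sum>s<n. \<Sum>t<n'. (A $$ (i div m', s) * C $$ (s, j div p')) * (B $$ (i mod m', t) * D $$ (t, j mod p')))"
  proof (intro sum.cong refl)
    fix s t assume s: "s \<in> {..<n}" and t: "t \<in> {..<n'}"
    have st: "s*n'+t < n*n'" using s t
      by (metis lessThan_iff add.commute less_imp_le_nat mult.commute mult_less_cancel2 nat_add_left_cancel_less  mult_Suc_right trans_less_add1 less_le_trans Suc_leI add_mono_thms_linordered_field(4) zero_less_iff_neq_zero mult_le_mono2)
    have "(s*n'+t) div n' = s" "(s*n'+t) mod n' = t" using t by auto
    then show "kron A B $$ (i,s*n'+t) * kron C D $$ (s*n'+t,j) = (A $$ (i div m', s) * C $$ (s, j div p')) * (B $$ (i mod m', t) * D $$ (t, j mod p'))"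
      using assms i' j' st by (simp add: ac_simps)
  qed
  also have "\<dots> = (\<Sum>s<n. A $$ (i div m', s) * C $$ (s, j div p')) * (\<Sum>t<n'. B $$ (i mod m', t) * D $$ (t, j mod p'))"
    by (simp add: sum_product)
  also have "\<dots> = kron (A*C) (B*D) $$ (i,j)"
    using assms i' j' idm jdp by (simp add: scalar_prod_def atLeast0LessThan)
  finally show "(kron A B * kron C D) $$ (i,j) = kron (A*C) (B*D) $$ (i,j)" .
qed (use assms in auto)



definition pauli2 :: "pauli \<Rightarrow> complex mat" where
  "pauli2 p = mat 2 2 (\<lambda>(r,c). pauli_entry p r c)"

lemma psm_carrier: "pauli_string_mat ps \<in> carrier_mat (2^length ps) (2^length ps)"
  by (simp add: pauli_string_mat_def Let_def)

lemma bitk_lemma: "k < l \<Longrightarrow> (r mod 2^l) div 2^(l-1-k) mod 2 = r div 2^(l-1-k) mod (2::nat)"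
proof -
  assume k: "k < l"
  define m where "m = l-1-k"
  have l: "l = m + Suc k" using k m_def by simp
  have "(r mod 2^l) div 2^m = (r div 2^m) mod 2^(Suc k)"
    unfolding l power_add by (simp add: mod_mult2_eq)
  then show ?thesis unfolding m_def[symmetric] by (simp add: mod_mod_cancel)
qed

lemma psm_Cons: "pauli_string_mat (p#ps) = kron (pauli2 p) (pauli_string_mat ps)"
proof (rule eq_matI)
  let ?l = "length ps"
  fix i j assume i: "i < dim_row (kron (pauli2 p) (pauli_string_mat ps))" and j: "j < dim_col (kron (pauli2 p) (pauli_string_mat ps))"
  then have i': "i < 2 * 2^?l" and j': "j < 2 * 2^?l" by (auto simp: pauli2_def pauli_string_mat_def Let_def)
  have b0: "bitk (Suc ?l) 0 x = x div 2^?l" if "x < 2*2^?l" for x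
    using that by (simp add: bitk_def less_mult_imp_div_less)
  have bS: "bitk (Suc ?l) (Suc k) x = bitk ?l k (x mod 2^?l)" if "k < ?l" for k x
    using that bitk_lemma[of k ?l x] by (simp add: bitk_def)
  have "pauli_string_mat (p#ps) $$ (i,j) = (\<Prod>k<Suc ?l. pauli_entry ((p#ps) ! k) (bitk (Suc ?l) k i) (bitk (Suc ?l) k j))"
    using i' j' by (simp add: pauli_string_mat_def Let_def)
  also have "\<dots> = pauli_entry p (bitk (Suc ?l) 0 i) (bitk (Suc ?l) 0 j) * (\<Prod>k<?l. pauli_entry (ps ! k) (bitk (Suc ?l) (Suc k) i) (bitk (Suc ?l) (Suc k) j))"
    by (simp add: prod.lessThan_Suc_shift del: prod.lessThan_Suc)
  also have "\<dots> = pauli_entry p (i div 2^?l) (j div 2^?l) * (\<Prod>k<?l. pauli_entry (ps ! k) (bitk ?l k (i mod 2^?l)) (bitk ?l k (j mod 2^?l)))"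
    using b0 i' j' bS by simp
  also have "\<dots> = kron (pauli2 p) (pauli_string_mat ps) $$ (i,j)"
    using i' j' by (simp add: pauli2_def pauli_string_mat_def Let_def less_mult_imp_div_less)
  finally show "pauli_string_mat (p#ps) $$ (i,j) = kron (pauli2 p) (pauli_string_mat ps) $$ (i,j)" .
qed (auto simp: pauli2_def pauli_string_mat_def Let_def)

lemma sum2: "(\<Sum>i = 0..<2. f i) = f 0 + f (1::nat)"
  by (simp add: numeral_2_eq_2)

lemma pauli2_sq: "pauli2 p * pauli2 p = 1\<^sub>m 2"
  apply (rule eq_matI)
  apply (auto simp: pauli2_def scalar_prod_def sum2)
  apply (cases p; auto simp: less_2_cases_iff)+
  done

lemma kron_one: "kron (1\<^sub>m a) (1\<^sub>m b) = 1\<^sub>m (a*b)"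
proof (rule eq_matI)
  fix i j assume "i < dim_row (1\<^sub>m (a*b))" "j < dim_col (1\<^sub>m (a*b))"
  then have ij: "i < a*b" "j < a*b" by auto
  then have "b > 0" by (auto intro!: Nat.gr0I)
  then have "(i div b = j div b \<and> i mod b = j mod b) = (i = j)"
    by (metis div_mult_mod_eq)
  then show "kron (1\<^sub>m a) (1\<^sub>m b) $$ (i,j) = 1\<^sub>m (a*b) $$ (i,j)"
    using ij \<open>b>0\<close> by (auto simp: less_mult_imp_div_less)
qed auto

lemma psm_sq: "pauli_string_mat ps * pauli_string_mat ps = 1\<^sub>m (2^length ps)"
proof (induction ps)
  case Nil
  show ?case by (rule eq_matI) (auto simp: pauli_string_mat_def scalar_prod_def)
next
  case (Cons p ps)
  have c: "pauli2 p \<in> carrier_mat 2 2" by (simp add: pauli2_def)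
  show ?case unfolding psm_Cons
    using kron_mult[OF c c psm_carrier psm_carrier] Cons pauli2_sq kron_one by simp
qed

lemma pauli_entry_herm: "cnj (pauli_entry p a b) = pauli_entry p b a"
  by (cases p) auto

lemma psm_herm: "i < 2^length ps \<Longrightarrow> j < 2^length ps \<Longrightarrow>
   pauli_string_mat ps $$ (i,j) = cnj (pauli_string_mat ps $$ (j,i))"
  by (simp add: pauli_string_mat_def Let_def pauli_entry_herm)



definition herm :: "nat \<Rightarrow> complex mat \<Rightarrow> bool" where
  "herm N M \<longleftrightarrow> M \<in> carrier_mat N N \<and> (\<forall>i<N. \<forall>j<N. M $$ (i,j) = cnj (M $$ (j,i)))"

definition Qf :: "nat \<Rightarrow> complex mat \<Rightarrow> complex \<Rightarrow> complex mat" where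
  "Qf N U s = (1/2) \<cdot>\<^sub>m (1\<^sub>m N + s \<cdot>\<^sub>m U)"

definition sg :: "bool \<Rightarrow> complex" where "sg b = (if b then 1 else -1)"

fun proj :: "nat \<Rightarrow> complex mat list \<Rightarrow> bool list \<Rightarrow> complex mat" where
  "proj N [] bs = 1\<^sub>m N"
| "proj N (U#Us) [] = 1\<^sub>m N"
| "proj N (U#Us) (b#bs) = Qf N U (sg b) * proj N Us bs"

lemma Qf_carrier[simp]: "U \<in> carrier_mat N N \<Longrightarrow> Qf N U s \<in> carrier_mat N N"
  by (simp add: Qf_def)

lemma proj_carrier: "set Us \<subseteq> carrier_mat N N \<Longrightarrow> proj N Us bs \<in> carrier_mat N N"
proof (induction Us arbitrary: bs)
  case (Cons U Us) then show ?case by (cases bs) (auto intro: mult_carrier_mat[of _ N N _ N])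
qed simp

lemma Qf_comm:
  assumes U: "U \<in> carrier_mat N N" and V: "V \<in> carrier_mat N N" and c: "U * V = V * U"
  shows "Qf N U s * V = V * Qf N U s"
proof -
  have "(1\<^sub>m N + s \<cdot>\<^sub>m U) * V = V + s \<cdot>\<^sub>m (U * V)"
    using U V by (simp add: add_mult_distrib_mat[of _ N N _ _ N] mult_smult_assoc_mat[of _ N N _ N])
  then have 1: "Qf N U s * V = (1/2) \<cdot>\<^sub>m (V + s \<cdot>\<^sub>m (U * V))"
    unfolding Qf_def using U V by (simp add: mult_smult_assoc_mat[of _ N N _ N])
  have "V * (1\<^sub>m N + s \<cdot>\<^sub>m U) = V + s \<cdot>\<^sub>m (V * U)"
    using U V by (simp add: mult_add_distrib_mat[of _ N N _ N] mult_smult_distrib[of _ N N _ N])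
  then have 2: "V * Qf N U s = (1/2) \<cdot>\<^sub>m (V + s \<cdot>\<^sub>m (V * U))"
    unfolding Qf_def using U V by (simp add: mult_smult_distrib[of _ N N _ N])
  show ?thesis using 1 2 c by simp
qed

lemma proj_comm:
  assumes "set Us \<subseteq> carrier_mat N N" "V \<in> carrier_mat N N" "\<forall>U\<in>set Us. U * V = V * U"
  shows "proj N Us bs * V = V * proj N Us bs"
  using assms
proof (induction Us arbitrary: bs)
  case (Cons U Us)
  show ?case
  proof (cases bs)
    case (Cons b bs')
    have U: "U \<in> carrier_mat N N" and R: "proj N Us bs' \<in> carrier_mat N N" using Cons.prems proj_carrier by auto
    have "proj N (U#Us) bs * V = Qf N U (sg b) * (proj N Us bs' * V)"
      using Cons U R Cons.prems by (simp add: assoc_mult_mat[of _ N N _ N _ N])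
    also have "\<dots> = (Qf N U (sg b) * V) * proj N Us bs'"
      using Cons.IH[of bs'] Cons.prems U R by (simp add: assoc_mult_mat[of _ N N _ N _ N])
    also have "\<dots> = V * proj N (U#Us) bs"
      using Qf_comm[OF U, of V] Cons.prems U R Cons by (simp add: assoc_mult_mat[of _ N N _ N _ N])
    finally show ?thesis .
  qed (use Cons.prems in simp)
qed simp

lemma herm_mult:
  assumes "herm N A" "herm N B" "A * B = B * A"
  shows "herm N (A * B)"
  unfolding herm_def
proof (intro conjI allI impI)
  show "A * B \<in> carrier_mat N N" using assms by (auto simp: herm_def)
  fix i j assume i: "i < N" and j: "j < N"
  have A: "A \<in> carrier_mat N N" and B: "B \<in> carrier_mat N N" using assms by (auto simp: herm_def)
  have "(A*B) $$ (i,j) = (\<Sum>k<N. A $$ (i,k) * B $$ (k,j))"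
    using A B i j by (simp add: scalar_prod_def atLeast0LessThan)
  also have "\<dots> = (\<Sum>k<N. cnj (B $$ (j,k) * A $$ (k,i)))"
  proof (rule sum.cong[OF refl])
    fix k assume k: "k \<in> {..<N}"
    have "A $$ (i,k) = cnj (A $$ (k,i))" "B $$ (k,j) = cnj (B $$ (j,k))"
      using assms i j k unfolding herm_def by blast+
    then show "A $$ (i,k) * B $$ (k,j) = cnj (B $$ (j,k) * A $$ (k,i))" by simp
  qed
  also have "\<dots> = cnj (\<Sum>k<N. B $$ (j,k) * A $$ (k,i))" by (simp add: cnj_sum)
  also have "(\<Sum>k<N. B $$ (j,k) * A $$ (k,i)) = (B*A) $$ (j,i)"
    using A B i j by (simp add: scalar_prod_def atLeast0LessThan)
  finally show "(A*B) $$ (i,j) = cnj ((A*B) $$ (j,i))" using assms by simp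
qed

lemma Qf_herm: assumes "herm N U" "s \<in> \<real>" shows "herm N (Qf N U s)"
  unfolding herm_def
proof (intro conjI allI impI)
  show "Qf N U s \<in> carrier_mat N N" using assms by (simp add: herm_def)
  fix i j assume ij: "i < N" "j < N"
  have U: "U \<in> carrier_mat N N" using assms by (simp add: herm_def)
  have e: "cnj (U $$ (j,i)) = U $$ (i,j)" using assms ij unfolding herm_def by (metis complex_cnj_cnj)
  have cs: "cnj s = s" using assms(2) by (simp add: Reals_cnj_iff)
  have "Qf N U s $$ (i,j) = (1/2) * ((if i = j then 1 else 0) + s * U $$ (i,j))"
    using U ij by (simp add: Qf_def)
  also have "\<dots> = cnj ((1/2) * ((if j = i then 1 else 0) + s * U $$ (j,i)))"
    using cs by (simp add: e)
  also have "\<dots> = cnj (Qf N U s $$ (j,i))"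
    using U ij by (simp add: Qf_def)
  finally show "Qf N U s $$ (i,j) = cnj (Qf N U s $$ (j,i))" .
qed

lemma smult_smult_mat: "a \<cdot>\<^sub>m (b \<cdot>\<^sub>m A) = (a * b) \<cdot>\<^sub>m (A :: complex mat)"
  by (rule eq_matI) auto

lemma Qf_idem:
  assumes U: "U \<in> carrier_mat N N" and UU: "U * U = 1\<^sub>m N" and s: "s * s = 1"
  shows "Qf N U s * Qf N U s = Qf N U s"
proof -
  have e1: "(1\<^sub>m N + s \<cdot>\<^sub>m U) * (1\<^sub>m N + s \<cdot>\<^sub>m U) = (1\<^sub>m N + s \<cdot>\<^sub>m U) + s \<cdot>\<^sub>m (U * (1\<^sub>m N + s \<cdot>\<^sub>m U))"
    using U by (simp add: add_mult_distrib_mat[of _ N N _ _ N] mult_smult_assoc_mat[of _ N N _ N])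
  have e2: "U * (1\<^sub>m N + s \<cdot>\<^sub>m U) = U + s \<cdot>\<^sub>m 1\<^sub>m N"
    using U UU by (simp add: mult_add_distrib_mat[of _ N N _ N] mult_smult_distrib[of _ N N _ N])
  have e3: "(1\<^sub>m N + s \<cdot>\<^sub>m U) + s \<cdot>\<^sub>m (U + s \<cdot>\<^sub>m 1\<^sub>m N) = 2 \<cdot>\<^sub>m (1\<^sub>m N + s \<cdot>\<^sub>m U)"
  proof (rule eq_matI)
    fix i j assume "i < dim_row (2 \<cdot>\<^sub>m (1\<^sub>m N + s \<cdot>\<^sub>m U))" "j < dim_col (2 \<cdot>\<^sub>m (1\<^sub>m N + s \<cdot>\<^sub>m U))"
    then have ij: "i < N" "j < N" using U by auto
    have "s * (s * x) = x" for x using s by (simp add: mult.assoc[symmetric])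
    then show "((1\<^sub>m N + s \<cdot>\<^sub>m U) + s \<cdot>\<^sub>m (U + s \<cdot>\<^sub>m 1\<^sub>m N)) $$ (i,j) = (2 \<cdot>\<^sub>m (1\<^sub>m N + s \<cdot>\<^sub>m U)) $$ (i,j)"
      using U ij s by (simp add: distrib_left)
  qed (use U in auto)
  have "(1\<^sub>m N + s \<cdot>\<^sub>m U) * (1\<^sub>m N + s \<cdot>\<^sub>m U) = 2 \<cdot>\<^sub>m (1\<^sub>m N + s \<cdot>\<^sub>m U)"
    using e1 e2 e3 by simp
  then show ?thesis unfolding Qf_def using U
    by (simp add: mult_smult_assoc_mat[of _ N N _ N] mult_smult_distrib[of _ N N _ N] smult_smult_mat)
qed

lemma sg_sq[simp]: "sg b * sg b = 1" and sg_real[simp]: "sg b \<in> \<real>"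
  by (auto simp: sg_def)

lemma proj_herm_idem:
  assumes "\<forall>U\<in>set Us. herm N U \<and> U * U = 1\<^sub>m N" "\<forall>U\<in>set Us. \<forall>V\<in>set Us. U * V = V * U"
  shows "herm N (proj N Us bs) \<and> proj N Us bs * proj N Us bs = proj N Us bs"
  using assms
proof (induction Us arbitrary: bs)
  case Nil then show ?case by (simp add: herm_def)
next
  case (Cons U Us)
  show ?case
  proof (cases bs)
    case Nil then show ?thesis by (simp add: herm_def)
  next
    case (Cons b bs')
    have hU: "herm N U" and UU: "U*U = 1\<^sub>m N" using Cons.prems(1) by auto
    have U: "U \<in> carrier_mat N N" using hU by (simp add: herm_def)
    have car: "set Us \<subseteq> carrier_mat N N"
    proof
      fix V assume "V \<in> set Us"
      then have "herm N V" using Cons.prems(1) by simp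
      then show "V \<in> carrier_mat N N" by (simp add: herm_def)
    qed
    let ?Q = "Qf N U (sg b)" and ?R = "proj N Us bs'"
    have R: "?R \<in> carrier_mat N N" using proj_carrier[OF car] .
    have Q: "?Q \<in> carrier_mat N N" using U by simp
    have p1: "\<forall>U\<in>set Us. herm N U \<and> U * U = 1\<^sub>m N" using Cons.prems(1) by (meson list.set_intros(2))
    have p2: "\<forall>U\<in>set Us. \<forall>V\<in>set Us. U * V = V * U" using Cons.prems(2) by (meson list.set_intros(2))
    note IH0 = Cons.IH[OF p1 p2, of bs']
    have IH: "herm N ?R" "?R * ?R = ?R" using IH0 by auto
    have cU: "\<forall>V\<in>set Us. V * ?Q = ?Q * V"
    proof
      fix V assume V: "V \<in> set Us"
      then have UV: "U * V = V * U" using Cons.prems(2) by (meson list.set_intros)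
      have Vc: "V \<in> carrier_mat N N" using V car by blast
      show "V * ?Q = ?Q * V" using Qf_comm[OF U Vc UV] by (rule sym)
    qed
    have QR: "?Q * ?R = ?R * ?Q"
      using proj_comm[OF car Q cU, of bs'] by simp
    have "herm N (?Q * ?R)" by (rule herm_mult[OF Qf_herm[OF hU sg_real] IH(1) QR])
    moreover have "(?Q * ?R) * (?Q * ?R) = ?Q * ?R"
    proof -
      have "(?Q * ?R) * (?Q * ?R) = ?Q * ((?R * ?Q) * ?R)"
        using Q R by (simp add: assoc_mult_mat[of _ N N _ N _ N])
      also have "\<dots> = ?Q * ((?Q * ?R) * ?R)"
        by (simp only: QR)
      also have "\<dots> = ?Q * (?Q * (?R * ?R))"
        using Q R by (simp add: assoc_mult_mat[of _ N N _ N _ N])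
      also have "\<dots> = (?Q * ?Q) * (?R * ?R)"
        using Q R by (simp add: assoc_mult_mat[of _ N N _ N _ N])
      finally show ?thesis using Qf_idem[OF U UU sg_sq] IH by simp
    qed
    ultimately show ?thesis unfolding \<open>bs = b # bs'\<close> proj.simps(3) by blast
  qed
qed

definition lenset :: "nat \<Rightarrow> bool list set" where "lenset k = {bs. length bs = k}"

lemma finite_lenset[simp]: "finite (lenset k)"
  using finite_lists_length_eq[of "UNIV::bool set" k] by (simp add: lenset_def)

lemma sum_lenset_Suc: "(\<Sum>bs\<in>lenset (Suc k). f bs) = (\<Sum>b\<in>UNIV. \<Sum>bs\<in>lenset k. f (b#bs))"
proof -
  have "lenset (Suc k) = (\<lambda>(b,bs). b#bs) ` (UNIV \<times> lenset k)"
    by (auto simp: lenset_def image_iff length_Suc_conv)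
  moreover have "inj_on (\<lambda>(b,bs). b#bs) (UNIV \<times> lenset k)" by (auto simp: inj_on_def)
  ultimately have "(\<Sum>bs\<in>lenset (Suc k). f bs) = (\<Sum>(b,bs)\<in>UNIV \<times> lenset k. f (b#bs))"
    by (simp add: sum.reindex case_prod_unfold)
  then show ?thesis by (simp add: sum.cartesian_product)
qed

lemma sum3_swap: "(\<Sum>a\<in>A. \<Sum>b\<in>B. \<Sum>k\<in>C. f a b k) = (\<Sum>k\<in>C. \<Sum>a\<in>A. \<Sum>b\<in>B. f a b k)"
proof -
  have "(\<Sum>a\<in>A. \<Sum>b\<in>B. \<Sum>k\<in>C. f a b k) = (\<Sum>a\<in>A. \<Sum>k\<in>C. \<Sum>b\<in>B. f a b k)"
    by (rule sum.cong[OF refl], rule sum.swap)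
  also have "\<dots> = (\<Sum>k\<in>C. \<Sum>a\<in>A. \<Sum>b\<in>B. f a b k)" by (rule sum.swap)
  finally show ?thesis .
qed

lemma sum_prod_swap: "(\<Sum>k\<in>C. (\<Sum>a\<in>A. f a k) * (\<Sum>b\<in>B. g b k)) = (\<Sum>a\<in>A. \<Sum>b\<in>B. \<Sum>k\<in>C. f a k * (g b k :: complex))"
proof -
  have "(\<Sum>k\<in>C. (\<Sum>a\<in>A. f a k) * (\<Sum>b\<in>B. g b k)) = (\<Sum>k\<in>C. \<Sum>a\<in>A. \<Sum>b\<in>B. f a k * g b k)"
    by (simp only: sum_product)
  also have "\<dots> = (\<Sum>a\<in>A. \<Sum>b\<in>B. \<Sum>k\<in>C. f a k * (g b k :: complex))"
    by (rule sum3_swap[symmetric])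
  finally show ?thesis .
qed

lemma sum_bool: "(\<Sum>b\<in>(UNIV::bool set). f b) = f True + f False"
  by (simp add: UNIV_bool add.commute)

lemma mult_entry: "A \<in> carrier_mat N N \<Longrightarrow> B \<in> carrier_mat N N \<Longrightarrow> i < N \<Longrightarrow> j < N \<Longrightarrow>
  (A * B) $$ (i,j) = (\<Sum>k<N. A $$ (i,k) * B $$ (k,j))"
  by (simp add: scalar_prod_def atLeast0LessThan)

lemma half_lemmas: "(a + u)/2 + (a - u)/2 = (a::complex)" "(a + u)/2 - (a - u)/2 = (u::complex)"
   "(a + u)/2 + (a + - u)/2 = (a::complex)" "(a + u)/2 - (a + - u)/2 = (u::complex)"
   "(a + u)/2 + (u - a)/2 = (u::complex)"
  by (simp_all add: diff_divide_distrib[symmetric] add_divide_distrib[symmetric])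

lemma Qf_sum: assumes U: "U \<in> carrier_mat N N" "i < N" "k < N" shows
 "(\<Sum>b\<in>UNIV. Qf N U (sg b) $$ (i,k)) = 1\<^sub>m N $$ (i,k)"
      using assms by (simp add: sum_bool Qf_def sg_def half_lemmas)

lemma Qf_sum_sg: assumes U: "U \<in> carrier_mat N N" "i < N" "k < N" shows
 "(\<Sum>b\<in>UNIV. sg b * Qf N U (sg b) $$ (i,k)) = U $$ (i,k)"
      using assms by (simp add: sum_bool Qf_def sg_def half_lemmas)

lemma sum_delta_r: "finite A \<Longrightarrow> (\<Sum>k\<in>A. f k * (if k = j then 1 else (0::complex))) = (if j \<in> A then f j else 0)"
proof -
  assume "finite A"
  have "(\<Sum>k\<in>A. f k * (if k = j then 1 else (0::complex))) = (\<Sum>k\<in>A. if k = j then f k else 0)"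
    by (rule sum.cong) auto
  then show ?thesis using \<open>finite A\<close> by (simp add: sum.delta')
qed

lemma sum_delta_l: "finite A \<Longrightarrow> (\<Sum>k\<in>A. (if i = k then 1 else (0::complex)) * f k) = (if i \<in> A then f i else 0)"
proof -
  assume "finite A"
  have "(\<Sum>k\<in>A. (if i = k then 1 else (0::complex)) * f k) = (\<Sum>k\<in>A. if i = k then f k else 0)"
    by (rule sum.cong) auto
  then show ?thesis using \<open>finite A\<close> by (simp add: sum.delta)
qed

lemma proj_sum:
  assumes "set Us \<subseteq> carrier_mat N N" "i < N" "j < N"
  shows "(\<Sum>bs\<in>lenset (length Us). proj N Us bs $$ (i,j)) = 1\<^sub>m N $$ (i,j)"
  using assms
proof (induction Us arbitrary: i j)
  case Nil then show ?case by (simp add: lenset_def)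
next
  case (Cons U Us)
  have U: "U \<in> carrier_mat N N" and car: "set Us \<subseteq> carrier_mat N N" using Cons.prems by auto
  have "(\<Sum>bs\<in>lenset (length (U#Us)). proj N (U#Us) bs $$ (i,j))
     = (\<Sum>b\<in>UNIV. \<Sum>bs\<in>lenset (length Us). \<Sum>k<N. Qf N U (sg b) $$ (i,k) * proj N Us bs $$ (k,j))"
    using Cons.prems U proj_carrier[OF car]
    by (simp add: sum_lenset_Suc mult_entry[OF Qf_carrier[OF U] proj_carrier[OF car]])
  also have "\<dots> = (\<Sum>k<N. (\<Sum>b\<in>UNIV. Qf N U (sg b) $$ (i,k)) * (\<Sum>bs\<in>lenset (length Us). proj N Us bs $$ (k,j)))"
    by (rule sum_prod_swap[symmetric])
  also have "\<dots> = (\<Sum>k<N. 1\<^sub>m N $$ (i,k) * 1\<^sub>m N $$ (k,j))"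
  proof (intro sum.cong refl)
    fix k assume k: "k \<in> {..<N}"
    have "(\<Sum>b\<in>UNIV. Qf N U (sg b) $$ (i,k)) = 1\<^sub>m N $$ (i,k)"
      using k U Cons.prems by (simp add: Qf_sum Qf_sum_sg)
    then show "(\<Sum>b\<in>UNIV. Qf N U (sg b) $$ (i,k)) * (\<Sum>bs\<in>lenset (length Us). proj N Us bs $$ (k,j)) = 1\<^sub>m N $$ (i,k) * 1\<^sub>m N $$ (k,j)"
      using Cons.IH[OF car] k Cons.prems by simp
  qed
  also have "\<dots> = 1\<^sub>m N $$ (i,j)" using Cons.prems
    by (simp add: sum_delta_l)
  finally show ?case .
qed

lemma proj_sum_sg:
  assumes "set Us \<subseteq> carrier_mat N N" "i < N" "j < N" "p < length Us"
  shows "(\<Sum>bs\<in>lenset (length Us). sg (bs ! p) * proj N Us bs $$ (i,j)) = (Us ! p) $$ (i,j)"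
  using assms
proof (induction Us arbitrary: i j p)
  case Nil then show ?case by simp
next
  case (Cons U Us)
  have U: "U \<in> carrier_mat N N" and car: "set Us \<subseteq> carrier_mat N N" using Cons.prems by auto
  note me = mult_entry[OF Qf_carrier[OF U] proj_carrier[OF car]]
  show ?case
  proof (cases p)
    case 0
    have "(\<Sum>bs\<in>lenset (length (U#Us)). sg (bs ! p) * proj N (U#Us) bs $$ (i,j))
       = (\<Sum>b\<in>UNIV. \<Sum>bs\<in>lenset (length Us). sg b * (\<Sum>k<N. Qf N U (sg b) $$ (i,k) * proj N Us bs $$ (k,j)))"
      using Cons.prems 0 by (simp add: sum_lenset_Suc me)
    also have "\<dots> = (\<Sum>b\<in>UNIV. \<Sum>bs\<in>lenset (length Us). \<Sum>k<N. (sg b * Qf N U (sg b) $$ (i,k)) * proj N Us bs $$ (k,j))"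
      by (simp add: sum_distrib_left mult.assoc)
    also have "\<dots> = (\<Sum>k<N. (\<Sum>b\<in>UNIV. sg b * Qf N U (sg b) $$ (i,k)) * (\<Sum>bs\<in>lenset (length Us). proj N Us bs $$ (k,j)))"
      by (rule sum_prod_swap[symmetric])
    also have "\<dots> = (\<Sum>k<N. U $$ (i,k) * 1\<^sub>m N $$ (k,j))"
    proof (intro sum.cong refl)
      fix k assume k: "k \<in> {..<N}"
      have "(\<Sum>b\<in>UNIV. sg b * Qf N U (sg b) $$ (i,k)) = U $$ (i,k)"
        using k U Cons.prems by (simp add: Qf_sum Qf_sum_sg)
      then show "(\<Sum>b\<in>UNIV. sg b * Qf N U (sg b) $$ (i,k)) * (\<Sum>bs\<in>lenset (length Us). proj N Us bs $$ (k,j)) = U $$ (i,k) * 1\<^sub>m N $$ (k,j)"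
        using proj_sum[OF car] k Cons.prems by simp
    qed
    also have "\<dots> = (U#Us) ! p $$ (i,j)" using Cons.prems 0
      by (simp add: sum_delta_r)
    finally show ?thesis .
  next
    case (Suc q)
    have "(\<Sum>bs\<in>lenset (length (U#Us)). sg (bs ! p) * proj N (U#Us) bs $$ (i,j))
       = (\<Sum>b\<in>UNIV. \<Sum>bs\<in>lenset (length Us). sg (bs ! q) * (\<Sum>k<N. Qf N U (sg b) $$ (i,k) * proj N Us bs $$ (k,j)))"
      using Cons.prems Suc by (simp add: sum_lenset_Suc me)
    also have "\<dots> = (\<Sum>b\<in>UNIV. \<Sum>bs\<in>lenset (length Us). \<Sum>k<N. Qf N U (sg b) $$ (i,k) * (sg (bs ! q) * proj N Us bs $$ (k,j)))"
      by (simp add: sum_distrib_left mult.left_commute)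
    also have "\<dots> = (\<Sum>k<N. (\<Sum>b\<in>UNIV. Qf N U (sg b) $$ (i,k)) * (\<Sum>bs\<in>lenset (length Us). sg (bs ! q) * proj N Us bs $$ (k,j)))"
      by (rule sum_prod_swap[symmetric])
    also have "\<dots> = (\<Sum>k<N. 1\<^sub>m N $$ (i,k) * (Us ! q) $$ (k,j))"
    proof (intro sum.cong refl)
      fix k assume k: "k \<in> {..<N}"
      have "(\<Sum>b\<in>UNIV. Qf N U (sg b) $$ (i,k)) = 1\<^sub>m N $$ (i,k)"
        using k U Cons.prems by (simp add: Qf_sum Qf_sum_sg)
      then show "(\<Sum>b\<in>UNIV. Qf N U (sg b) $$ (i,k)) * (\<Sum>bs\<in>lenset (length Us). sg (bs ! q) * proj N Us bs $$ (k,j)) = 1\<^sub>m N $$ (i,k) * (Us ! q) $$ (k,j)"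
      proof -
        have "(\<Sum>bs\<in>lenset (length Us). sg (bs ! q) * proj N Us bs $$ (k,j)) = (Us ! q) $$ (k,j)"
          by (rule Cons.IH[OF car]) (use k Cons.prems Suc in auto)
        then show ?thesis using \<open>(\<Sum>b\<in>UNIV. Qf N U (sg b) $$ (i,k)) = 1\<^sub>m N $$ (i,k)\<close> by simp
      qed
    qed
    also have "\<dots> = (U#Us) ! p $$ (i,j)" using Cons.prems Suc
      by (simp add: sum_delta_l)
    finally show ?thesis .
  qed
qed



definition psdf :: "nat \<Rightarrow> (nat \<Rightarrow> nat \<Rightarrow> complex) \<Rightarrow> bool" where
  "psdf m f \<longleftrightarrow> (\<forall>v :: nat \<Rightarrow> complex. Im (\<Sum>i<m. \<Sum>j<m. cnj (v i) * f i j * v j) = 0 \<and>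
                                   Re (\<Sum>i<m. \<Sum>j<m. cnj (v i) * f i j * v j) \<ge> 0)"

lemma density_psdf: "density_matrix d \<rho> \<Longrightarrow> psdf d (\<lambda>i j. \<rho> $$ (i,j))"
  unfolding density_matrix_def psdf_def Let_def by blast

lemma density_parts:
  assumes "density_matrix d \<rho>"
  shows "\<rho> \<in> carrier_mat d d" "\<And>i j. i < d \<Longrightarrow> j < d \<Longrightarrow> \<rho> $$ (i,j) = cnj (\<rho> $$ (j,i))" "mat_trace \<rho> = 1"
proof -
  note A = assms[unfolded density_matrix_def]
  show "\<rho> \<in> carrier_mat d d" using conjunct1[OF A] .
  show "\<And>i j. i < d \<Longrightarrow> j < d \<Longrightarrow> \<rho> $$ (i,j) = cnj (\<rho> $$ (j,i))" using conjunct1[OF conjunct2[OF A]] by blast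
  show "mat_trace \<rho> = 1" using conjunct2[OF conjunct2[OF conjunct2[OF A]]] .
qed

lemma herm_entry: "herm N M \<Longrightarrow> i < N \<Longrightarrow> j < N \<Longrightarrow> M $$ (i,j) = cnj (M $$ (j,i))"
  unfolding herm_def by blast

lemma herm_carrier: "herm N M \<Longrightarrow> M \<in> carrier_mat N N"
  unfolding herm_def by blast

lemma sum5_perm: "(\<Sum>a\<in>A. \<Sum>c\<in>C. \<Sum>x\<in>X. \<Sum>y\<in>Y. \<Sum>r\<in>R. F a c x y r)
   = (\<Sum>r\<in>R. \<Sum>x\<in>X. \<Sum>y\<in>Y. \<Sum>a\<in>A. \<Sum>c\<in>C. F a c x y r)"
proof -
  have "(\<Sum>a\<in>A. \<Sum>c\<in>C. \<Sum>x\<in>X. \<Sum>y\<in>Y. \<Sum>r\<in>R. F a c x y r) = (\<Sum>a\<in>A. \<Sum>c\<in>C. \<Sum>x\<in>X. \<Sum>r\<in>R. \<Sum>y\<in>Y. F a c x y r)"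
    by (intro sum.cong refl sum.swap)
  also have "\<dots> = (\<Sum>a\<in>A. \<Sum>c\<in>C. \<Sum>r\<in>R. \<Sum>x\<in>X. \<Sum>y\<in>Y. F a c x y r)"
    by (intro sum.cong refl sum.swap)
  also have "\<dots> = (\<Sum>a\<in>A. \<Sum>r\<in>R. \<Sum>c\<in>C. \<Sum>x\<in>X. \<Sum>y\<in>Y. F a c x y r)"
    by (intro sum.cong refl sum.swap)
  also have "\<dots> = (\<Sum>r\<in>R. \<Sum>a\<in>A. \<Sum>c\<in>C. \<Sum>x\<in>X. \<Sum>y\<in>Y. F a c x y r)"
    by (rule sum.swap)
  also have "\<dots> = (\<Sum>r\<in>R. \<Sum>a\<in>A. \<Sum>x\<in>X. \<Sum>c\<in>C. \<Sum>y\<in>Y. F a c x y r)"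
    by (intro sum.cong refl sum.swap)
  also have "\<dots> = (\<Sum>r\<in>R. \<Sum>a\<in>A. \<Sum>x\<in>X. \<Sum>y\<in>Y. \<Sum>c\<in>C. F a c x y r)"
    by (intro sum.cong refl sum.swap)
  also have "\<dots> = (\<Sum>r\<in>R. \<Sum>x\<in>X. \<Sum>a\<in>A. \<Sum>y\<in>Y. \<Sum>c\<in>C. F a c x y r)"
    by (intro sum.cong refl sum.swap)
  also have "\<dots> = (\<Sum>r\<in>R. \<Sum>x\<in>X. \<Sum>y\<in>Y. \<Sum>a\<in>A. \<Sum>c\<in>C. F a c x y r)"
    by (intro sum.cong refl sum.swap)
  finally show ?thesis .
qed

definition tau :: "nat \<Rightarrow> nat \<Rightarrow> complex mat \<Rightarrow> complex mat \<Rightarrow> nat \<Rightarrow> nat \<Rightarrow> complex" where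
  "tau d d' \<rho> Pm a c = (\<Sum>x<d. \<Sum>y<d. \<rho> $$ (x,y) * Pm $$ (x*d'+a, y*d'+c))"

lemma idx_lt: "x < d \<Longrightarrow> a < d' \<Longrightarrow> x*d'+a < d*(d'::nat)"
  by (metis add.commute add_less_cancel_left less_le_trans mult.commute mult_Suc_right mult_le_mono2 Suc_leI)

lemma herm_idem_exp:
  assumes "herm N Pm" "Pm * Pm = Pm" "p < N" "q < N"
  shows "Pm $$ (p,q) = (\<Sum>r<N. cnj (Pm $$ (r,p)) * Pm $$ (r,q))"
proof -
  have car: "Pm \<in> carrier_mat N N" using herm_carrier[OF assms(1)] .
  have "Pm $$ (p,q) = (Pm * Pm) $$ (p,q)" by (simp only: assms(2))
  also have "\<dots> = (\<Sum>r<N. Pm $$ (p,r) * Pm $$ (r,q))" by (rule mult_entry[OF car car assms(3,4)])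
  also have "\<dots> = (\<Sum>r<N. cnj (Pm $$ (r,p)) * Pm $$ (r,q))"
  proof (rule sum.cong[OF refl])
    fix r assume "r \<in> {..<N}"
    then have "Pm $$ (p,r) = cnj (Pm $$ (r,p))" using herm_entry[OF assms(1) assms(3), of r] by simp
    then show "Pm $$ (p,r) * Pm $$ (r,q) = cnj (Pm $$ (r,p)) * Pm $$ (r,q)" by simp
  qed
  finally show ?thesis .
qed

lemma tau_psd:
  assumes \<rho>: "density_matrix d \<rho>" and H: "herm (d*d') Pm" and I: "Pm * Pm = Pm"
  shows "psdf d' (tau d d' \<rho> Pm)"
  unfolding psdf_def
proof
  fix v :: "nat \<Rightarrow> complex"
  let ?N = "d*d'"
  define w where "w r y = (\<Sum>c<d'. Pm $$ (r, y*d'+c) * v c)" for r y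
  have e1: "(\<Sum>a<d'. \<Sum>c<d'. cnj (v a) * tau d d' \<rho> Pm a c * v c)
     = (\<Sum>a<d'. \<Sum>c<d'. \<Sum>x<d. \<Sum>y<d. \<Sum>r<?N. cnj (Pm $$ (r, x*d'+a)) * cnj (v a) * \<rho> $$ (x,y) * (Pm $$ (r, y*d'+c) * v c))"
  proof (intro sum.cong refl)
    fix a c assume a: "a \<in> {..<d'}" and c: "c \<in> {..<d'}"
    have "tau d d' \<rho> Pm a c = (\<Sum>x<d. \<Sum>y<d. \<rho> $$ (x,y) * (\<Sum>r<?N. cnj (Pm $$ (r, x*d'+a)) * Pm $$ (r, y*d'+c)))"
      unfolding tau_def
      by (intro sum.cong refl, subst herm_idem_exp[OF H I]) (use a c idx_lt in auto)
    then show "cnj (v a) * tau d d' \<rho> Pm a c * v c = (\<Sum>x<d. \<Sum>y<d. \<Sum>r<?N. cnj (Pm $$ (r, x*d'+a)) * cnj (v a) * \<rho> $$ (x,y) * (Pm $$ (r, y*d'+c) * v c))"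
      by (simp add: sum_distrib_left sum_distrib_right ac_simps)
  qed
  also have "\<dots> = (\<Sum>r<?N. \<Sum>x<d. \<Sum>y<d. \<Sum>a<d'. \<Sum>c<d'. cnj (Pm $$ (r, x*d'+a)) * cnj (v a) * \<rho> $$ (x,y) * (Pm $$ (r, y*d'+c) * v c))"
    by (rule sum5_perm)
  also have "\<dots> = (\<Sum>r<?N. \<Sum>x<d. \<Sum>y<d. cnj (w r x) * \<rho> $$ (x,y) * w r y)"
    unfolding w_def by (simp add: sum_distrib_left sum_distrib_right cnj_sum ac_simps)
  finally have eq: "(\<Sum>a<d'. \<Sum>c<d'. cnj (v a) * tau d d' \<rho> Pm a c * v c) = (\<Sum>r<?N. \<Sum>x<d. \<Sum>y<d. cnj (w r x) * \<rho> $$ (x,y) * w r y)" .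
  have each: "Im (\<Sum>x<d. \<Sum>y<d. cnj (w r x) * \<rho> $$ (x,y) * w r y) = 0 \<and> Re (\<Sum>x<d. \<Sum>y<d. cnj (w r x) * \<rho> $$ (x,y) * w r y) \<ge> 0" for r
    using density_psdf[OF \<rho>] unfolding psdf_def by blast
  show "Im (\<Sum>a<d'. \<Sum>c<d'. cnj (v a) * tau d d' \<rho> Pm a c * v c) = 0 \<and> 0 \<le> Re (\<Sum>a<d'. \<Sum>c<d'. cnj (v a) * tau d d' \<rho> Pm a c * v c)"
    unfolding eq using each by (simp add: Im_sum Re_sum sum_nonneg)
qed


lemma tau_herm:
  assumes \<rho>: "density_matrix d \<rho>" and H: "herm (d*d') Pm" and a: "a < d'" and c: "c < d'"
  shows "tau d d' \<rho> Pm a c = cnj (tau d d' \<rho> Pm c a)"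
proof -
  have "cnj (tau d d' \<rho> Pm c a) = (\<Sum>x<d. \<Sum>y<d. cnj (\<rho> $$ (x,y)) * cnj (Pm $$ (x*d'+c, y*d'+a)))"
    unfolding tau_def cnj_sum complex_cnj_mult by (rule refl)
  also have "\<dots> = (\<Sum>x<d. \<Sum>y<d. \<rho> $$ (y,x) * Pm $$ (y*d'+a, x*d'+c))"
  proof (intro sum.cong refl)
    fix x y assume x: "x \<in> {..<d}" and y: "y \<in> {..<d}"
    have "\<rho> $$ (y,x) = cnj (\<rho> $$ (x,y))" using density_parts(2)[OF \<rho>, of y x] x y by blast
    moreover have "Pm $$ (y*d'+a, x*d'+c) = cnj (Pm $$ (x*d'+c, y*d'+a))"
      by (rule herm_entry[OF H idx_lt idx_lt]) (use x y a c in auto)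
    ultimately show "cnj (\<rho> $$ (x,y)) * cnj (Pm $$ (x*d'+c, y*d'+a)) = \<rho> $$ (y,x) * Pm $$ (y*d'+a, x*d'+c)"
      by simp
  qed
  also have "\<dots> = tau d d' \<rho> Pm a c"
    unfolding tau_def by (rule sum.swap)
  finally show ?thesis by simp
qed

lemma tr_bound:
  assumes f: "psdf m f" and X: "herm m X" and XX: "X * X = 1\<^sub>m m"
  shows "\<bar>Re (\<Sum>a<m. \<Sum>c<m. f a c * X $$ (c,a))\<bar> \<le> Re (\<Sum>a<m. f a a)"
proof -
  have Xc: "X \<in> carrier_mat m m" using herm_carrier[OF X] .
  have key: "Re (\<Sum>a<m. f a a) + Re e * Re (\<Sum>a<m. \<Sum>c<m. f a c * X $$ (c,a)) \<ge> 0"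
    if e: "e = 1 \<or> e = -1" for e :: complex
  proof -
    have er: "cnj e = e" "e * e = 1" "Im e = 0" using e by auto
    define v where "v k c = (if c = k then 1 else 0) + e * X $$ (c,k)" for k c
    have vv: "(\<Sum>k<m. v k c * cnj (v k a)) = 2 * (if c = a then 1 else 0) + 2 * e * X $$ (c,a)"
      if c: "c < m" and a: "a < m" for a c
    proof -
      have t: "v k c * cnj (v k a) = (if c = k then 1 else 0) * (if k = a then 1 else 0) + e * ((if c = k then 1 else 0) * X $$ (k,a))
              + e * (X $$ (c,k) * (if k = a then 1 else 0)) + (e * e) * (X $$ (c,k) * X $$ (k,a))" if k: "k < m" for k
      proof -
        have "cnj (X $$ (a,k)) = X $$ (k,a)" using herm_entry[OF X k a] by simp
        then show ?thesis unfolding v_def using er by (auto simp: algebra_simps)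
      qed
      have "(\<Sum>k<m. X $$ (c,k) * X $$ (k,a)) = (X * X) $$ (c,a)" using mult_entry[OF Xc Xc c a] by simp
      also have "\<dots> = (if c = a then 1 else 0)" using XX c a by simp
      finally have xx: "(\<Sum>k<m. X $$ (c,k) * X $$ (k,a)) = (if c = a then 1 else 0)" .
      have "(\<Sum>k<m. v k c * cnj (v k a)) = (\<Sum>k<m. (if c = k then 1 else 0) * (if k = a then 1 else 0)) + e * (\<Sum>k<m. (if c = k then 1 else 0) * X $$ (k,a))
              + e * (\<Sum>k<m. X $$ (c,k) * (if k = a then 1 else 0)) + (e * e) * (\<Sum>k<m. X $$ (c,k) * X $$ (k,a))"
        by (simp add: t sum.distrib sum_distrib_left)
      also have "\<dots> = 2 * (if c = a then 1 else 0) + 2 * e * X $$ (c,a)"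
        using c a er xx by (simp add: sum_delta_l sum_delta_r)
      finally show ?thesis .
    qed
    have "(\<Sum>k<m. \<Sum>a<m. \<Sum>c<m. cnj (v k a) * f a c * v k c) = (\<Sum>a<m. \<Sum>c<m. \<Sum>k<m. cnj (v k a) * f a c * v k c)"
      by (rule sum3_swap[symmetric])
    also have "\<dots> = (\<Sum>a<m. \<Sum>c<m. f a c * (2 * (if c = a then 1 else 0) + 2 * e * X $$ (c,a)))"
    proof (intro sum.cong refl)
      fix a c assume a: "a \<in> {..<m}" and c: "c \<in> {..<m}"
      have "(\<Sum>k<m. cnj (v k a) * f a c * v k c) = f a c * (\<Sum>k<m. v k c * cnj (v k a))"
        by (simp add: sum_distrib_left ac_simps)
      then show "(\<Sum>k<m. cnj (v k a) * f a c * v k c) = f a c * (2 * (if c = a then 1 else 0) + 2 * e * X $$ (c,a))"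
        using vv a c by simp
    qed
    also have "\<dots> = 2 * (\<Sum>a<m. f a a) + 2 * e * (\<Sum>a<m. \<Sum>c<m. f a c * X $$ (c,a))"
    proof -
      have "(\<Sum>a<m. \<Sum>c<m. f a c * (2 * (if c = a then 1 else 0) + 2 * e * X $$ (c,a)))
        = (\<Sum>a<m. 2 * (\<Sum>c<m. f a c * (if c = a then 1 else 0)) + 2 * e * (\<Sum>c<m. f a c * X $$ (c,a)))"
        by (simp add: algebra_simps sum.distrib sum_distrib_left)
      also have "\<dots> = (\<Sum>a<m. 2 * f a a + 2 * e * (\<Sum>c<m. f a c * X $$ (c,a)))"
        by (simp add: sum_delta_r)
      finally show ?thesis by (simp add: sum.distrib sum_distrib_left)
    qed
    finally have eq: "(\<Sum>k<m. \<Sum>a<m. \<Sum>c<m. cnj (v k a) * f a c * v k c) = 2 * (\<Sum>a<m. f a a) + 2 * e * (\<Sum>a<m. \<Sum>c<m. f a c * X $$ (c,a))" .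
    have "Re (\<Sum>k<m. \<Sum>a<m. \<Sum>c<m. cnj (v k a) * f a c * v k c) \<ge> 0"
      using f unfolding psdf_def by (simp add: Re_sum sum_nonneg)
    then show ?thesis unfolding eq using er by simp
  qed
  show ?thesis using key[of 1] key[of "-1"] by auto
qed

lemma trace_expand: "A \<in> carrier_mat d d \<Longrightarrow> B \<in> carrier_mat d d \<Longrightarrow>
  mat_trace (A * B) = (\<Sum>a<d. \<Sum>c<d. A $$ (a,c) * B $$ (c,a))"
proof -
  assume A: "A \<in> carrier_mat d d" and B: "B \<in> carrier_mat d d"
  have "mat_trace (A * B) = (\<Sum>a<d. (A*B) $$ (a,a))" using A by (simp add: mat_trace_def)
  also have "\<dots> = (\<Sum>a<d. \<Sum>c<d. A $$ (a,c) * B $$ (c,a))"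
    by (rule sum.cong[OF refl], rule mult_entry[OF A B]) auto
  finally show ?thesis .
qed

lemma expect_bound:
  assumes \<rho>: "density_matrix d \<rho>" and P: "herm d P" and PP: "P * P = 1\<^sub>m d"
  shows "\<bar>expect \<rho> P\<bar> \<le> 1"
proof -
  have c: "\<rho> \<in> carrier_mat d d" "P \<in> carrier_mat d d" using density_parts(1)[OF \<rho>] herm_carrier[OF P] by auto
  have "\<bar>Re (\<Sum>a<d. \<Sum>c<d. \<rho> $$ (a,c) * P $$ (c,a))\<bar> \<le> Re (\<Sum>a<d. \<rho> $$ (a,a))"
    by (rule tr_bound[OF density_psdf[OF \<rho>] P PP])
  moreover have "(\<Sum>a<d. \<rho> $$ (a,a)) = 1" using density_parts(3)[OF \<rho>] c unfolding mat_trace_def by simp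
  ultimately show ?thesis unfolding expect_def using trace_expand[OF c] by simp
qed



definition cmat :: "complex mat \<Rightarrow> complex mat" where "cmat A = map_mat cnj A"

lemma cmat_dims[simp]: "dim_row (cmat A) = dim_row A" "dim_col (cmat A) = dim_col A"
  by (auto simp: cmat_def)

lemma cmat_mult: assumes "A \<in> carrier_mat m n" "B \<in> carrier_mat n p"
  shows "cmat (A * B) = cmat A * cmat B"
proof (rule eq_matI)
  fix i j assume "i < dim_row (cmat A * cmat B)" "j < dim_col (cmat A * cmat B)"
  then have ij: "i < m" "j < p" using assms by auto
  show "cmat (A * B) $$ (i,j) = (cmat A * cmat B) $$ (i,j)"
    using assms ij by (simp add: cmat_def scalar_prod_def cnj_sum)
qed (use assms in auto)

lemma cmat_uminus: "cmat (- A) = - cmat A"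
  by (rule eq_matI) (auto simp: cmat_def)

lemma cmat_one: "cmat (1\<^sub>m n) = 1\<^sub>m n"
  by (rule eq_matI) (auto simp: cmat_def)

lemma kron_uminus: "kron (- A) (- B) = kron A B"
proof (rule eq_matI)
  fix i j assume i: "i < dim_row (kron A B)" and j: "j < dim_col (kron A B)"
  then have i': "i < dim_row A * dim_row B" and j': "j < dim_col A * dim_col B" by auto
  then have p: "dim_row B > 0" "dim_col B > 0" by (auto intro!: Nat.gr0I)
  have "i div dim_row B < dim_row A" "j div dim_col B < dim_col A" "i mod dim_row B < dim_row B" "j mod dim_col B < dim_col B"
    using i' j' p by (auto simp: less_mult_imp_div_less)
  then show "kron (- A) (- B) $$ (i,j) = kron A B $$ (i,j)" using i' j' by simp
qed auto

definition Umat :: "pauli list \<Rightarrow> pauli list \<Rightarrow> complex mat" where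
  "Umat s s' = kron (cmat (pauli_string_mat s)) (pauli_string_mat s')"

lemma Umat_carrier: "Umat s s' \<in> carrier_mat (2^length s * 2^length s') (2^length s * 2^length s')"
proof -
  have "dim_row (pauli_string_mat s) = 2^length s" "dim_col (pauli_string_mat s) = 2^length s"
       "dim_row (pauli_string_mat s') = 2^length s'" "dim_col (pauli_string_mat s') = 2^length s'"
    using psm_carrier[of s] psm_carrier[of s'] by auto
  then show ?thesis unfolding carrier_mat_def Umat_def by (simp only: kron_carrier cmat_dims mem_Collect_eq conj_absorb)
qed

lemma Umat_herm: "herm (2^length s * 2^length s') (Umat s s')"
  unfolding herm_def
proof (intro conjI allI impI)
  show "Umat s s' \<in> carrier_mat (2^length s * 2^length s') (2^length s * 2^length s')" by (rule Umat_carrier)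
  fix i j :: nat assume i: "i < 2^length s * 2^length s'" and j: "j < 2^length s * 2^length s'"
  let ?d = "2^length s :: nat" and ?d' = "2^length s' :: nat"
  have d': "?d' > 0" by simp
  have idx: "i div ?d' < ?d" "j div ?d' < ?d" "i mod ?d' < ?d'" "j mod ?d' < ?d'"
    using i j by (auto simp: less_mult_imp_div_less)
  have c: "pauli_string_mat s \<in> carrier_mat ?d ?d" "pauli_string_mat s' \<in> carrier_mat ?d' ?d'"
    by (rule psm_carrier)+
  have "Umat s s' $$ (i,j) = cnj (pauli_string_mat s $$ (i div ?d', j div ?d')) * pauli_string_mat s' $$ (i mod ?d', j mod ?d')"
    using i j c idx by (simp add: Umat_def cmat_def)
  also have "\<dots> = cnj (cnj (pauli_string_mat s $$ (j div ?d', i div ?d')) * pauli_string_mat s' $$ (j mod ?d', i mod ?d'))"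
    using psm_herm[of "i div ?d'" s "j div ?d'"] psm_herm[of "j mod ?d'" s' "i mod ?d'"] idx by simp
  also have "cnj (pauli_string_mat s $$ (j div ?d', i div ?d')) * pauli_string_mat s' $$ (j mod ?d', i mod ?d') = Umat s s' $$ (j,i)"
    using i j c idx by (simp add: Umat_def cmat_def)
  finally show "Umat s s' $$ (i,j) = cnj (Umat s s' $$ (j,i))" .
qed

lemma Umat_sq: "Umat s s' * Umat s s' = 1\<^sub>m (2^length s * 2^length s')"
proof -
  have c: "cmat (pauli_string_mat s) \<in> carrier_mat (2^length s) (2^length s)" "pauli_string_mat s' \<in> carrier_mat (2^length s') (2^length s')"
    using psm_carrier[of s] psm_carrier[of s'] by auto
  show ?thesis unfolding Umat_def
    using kron_mult[OF c(1) c(1) c(2) c(2)] cmat_mult[OF psm_carrier psm_carrier, of s, symmetric] psm_sq cmat_one kron_one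
    by simp
qed

lemma Umat_comm:
  assumes l: "length s = length t" and l': "length s' = length t'"
    and c: "(pauli_string_mat s * pauli_string_mat t = - (pauli_string_mat t * pauli_string_mat s) \<and>
             pauli_string_mat s' * pauli_string_mat t' = - (pauli_string_mat t' * pauli_string_mat s')) \<or>
            (pauli_string_mat s * pauli_string_mat t = pauli_string_mat t * pauli_string_mat s \<and>
             pauli_string_mat s' * pauli_string_mat t' = pauli_string_mat t' * pauli_string_mat s')"
  shows "Umat s s' * Umat t t' = Umat t t' * Umat s s'"
proof -
  let ?P = "pauli_string_mat s" and ?Q = "pauli_string_mat t" and ?P' = "pauli_string_mat s'" and ?Q' = "pauli_string_mat t'"
  let ?d = "2^length s :: nat" and ?d' = "2^length s' :: nat"
  have cs: "?P \<in> carrier_mat ?d ?d" "?Q \<in> carrier_mat ?d ?d" "?P' \<in> carrier_mat ?d' ?d'" "?Q' \<in> carrier_mat ?d' ?d'"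
    using psm_carrier[of s] psm_carrier[of t] psm_carrier[of s'] psm_carrier[of t'] l l' by auto
  have ccs: "cmat ?P \<in> carrier_mat ?d ?d" "cmat ?Q \<in> carrier_mat ?d ?d" using cs by auto
  have e1: "Umat s s' * Umat t t' = kron (cmat (?P * ?Q)) (?P' * ?Q')"
    unfolding Umat_def using kron_mult[OF ccs(1) ccs(2) cs(3) cs(4)] cmat_mult[OF cs(1) cs(2)] by simp
  have e2: "Umat t t' * Umat s s' = kron (cmat (?Q * ?P)) (?Q' * ?P')"
    unfolding Umat_def using kron_mult[OF ccs(2) ccs(1) cs(4) cs(3)] cmat_mult[OF cs(2) cs(1)] by simp
  show ?thesis unfolding e1 e2 using c by (auto simp: cmat_uminus kron_uminus)
qed


lemma tau_lin:
  "(\<Sum>bs\<in>B. g bs * tau d d' \<rho> (Pm bs) a c) = (\<Sum>x<d. \<Sum>y<d. \<rho> $$ (x,y) * (\<Sum>bs\<in>B. g bs * Pm bs $$ (x*d'+a, y*d'+c)))"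
proof -
  have "(\<Sum>bs\<in>B. g bs * tau d d' \<rho> (Pm bs) a c) = (\<Sum>bs\<in>B. \<Sum>x<d. \<Sum>y<d. g bs * (\<rho> $$ (x,y) * Pm bs $$ (x*d'+a, y*d'+c)))"
    unfolding tau_def by (simp add: sum_distrib_left)
  also have "\<dots> = (\<Sum>x<d. \<Sum>y<d. \<Sum>bs\<in>B. g bs * (\<rho> $$ (x,y) * Pm bs $$ (x*d'+a, y*d'+c)))"
    by (rule sum3_swap[symmetric])
  also have "\<dots> = (\<Sum>x<d. \<Sum>y<d. \<rho> $$ (x,y) * (\<Sum>bs\<in>B. g bs * Pm bs $$ (x*d'+a, y*d'+c)))"
    by (intro sum.cong refl) (simp add: sum_distrib_left mult.left_commute)
  finally show ?thesis .
qed

lemma idx_eq: "a < d' \<Longrightarrow> b < d' \<Longrightarrow> (x*d'+a = y*d'+b) = (x = y \<and> a = (b::nat))"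
proof
  assume ab: "a < d'" "b < d'" and e: "x*d'+a = y*d'+b"
  then have "(x*d'+a) div d' = (y*d'+b) div d'" "(x*d'+a) mod d' = (y*d'+b) mod d'" by auto
  then show "x = y \<and> a = b" using ab by simp
qed auto

lemma sum_tau_trace:
  assumes \<rho>: "density_matrix d \<rho>" and Us: "set Us \<subseteq> carrier_mat (d*d') (d*d')"
  shows "(\<Sum>bs\<in>lenset (length Us). \<Sum>a<d'. tau d d' \<rho> (proj (d*d') Us bs) a a) = of_nat d'"
proof -
  have "(\<Sum>bs\<in>lenset (length Us). \<Sum>a<d'. tau d d' \<rho> (proj (d*d') Us bs) a a)
      = (\<Sum>a<d'. \<Sum>bs\<in>lenset (length Us). 1 * tau d d' \<rho> (proj (d*d') Us bs) a a)"
    by (simp add: sum.swap[of _ "lenset _"])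
  also have "\<dots> = (\<Sum>a<d'. \<Sum>x<d. \<Sum>y<d. \<rho> $$ (x,y) * (\<Sum>bs\<in>lenset (length Us). 1 * proj (d*d') Us bs $$ (x*d'+a, y*d'+a)))"
    by (simp only: tau_lin)
  also have "\<dots> = (\<Sum>a<d'. \<Sum>x<d. \<Sum>y<d. \<rho> $$ (x,y) * (if y = x then 1 else 0))"
  proof (intro sum.cong refl)
    fix a x y assume a: "a \<in> {..<d'}" and x: "x \<in> {..<d}" and y: "y \<in> {..<d}"
    have "(\<Sum>bs\<in>lenset (length Us). 1 * proj (d*d') Us bs $$ (x*d'+a, y*d'+a)) = 1\<^sub>m (d*d') $$ (x*d'+a, y*d'+a)"
      using proj_sum[OF Us idx_lt idx_lt] a x y by simp
    also have "\<dots> = (if y = x then 1 else 0)" using idx_lt[of x d a d'] idx_lt[of y d a d'] a x y idx_eq[of a d' a x y] by simp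
    finally show "\<rho> $$ (x,y) * (\<Sum>bs\<in>lenset (length Us). 1 * proj (d*d') Us bs $$ (x*d'+a, y*d'+a)) = \<rho> $$ (x,y) * (if y = x then 1 else 0)"
      by simp
  qed
  also have "\<dots> = (\<Sum>a<d'. \<Sum>x<d. \<rho> $$ (x,x))"
    by (intro sum.cong refl) (simp add: sum_delta_r)
  also have "\<dots> = (\<Sum>a<d'. 1)"
    using density_parts(1,3)[OF \<rho>] by (simp add: mat_trace_def)
  finally show ?thesis by simp
qed

lemma sum_tau_sg:
  assumes \<rho>: "density_matrix d \<rho>" and Us: "set Us \<subseteq> carrier_mat (d*d') (d*d')" and q: "q < length Us"
    and Uq: "Us ! q = kron (cmat P) P'" and P: "herm d P" and P': "P' \<in> carrier_mat d' d'" and PP: "P' * P' = 1\<^sub>m d'"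
  shows "(\<Sum>bs\<in>lenset (length Us). sg (bs ! q) * (\<Sum>a<d'. \<Sum>c<d'. tau d d' \<rho> (proj (d*d') Us bs) a c * P' $$ (c,a)))
         = of_nat d' * mat_trace (\<rho> * P)"
proof -
  have Pc: "P \<in> carrier_mat d d" using herm_carrier[OF P] .
  have "(\<Sum>bs\<in>lenset (length Us). sg (bs ! q) * (\<Sum>a<d'. \<Sum>c<d'. tau d d' \<rho> (proj (d*d') Us bs) a c * P' $$ (c,a)))
      = (\<Sum>bs\<in>lenset (length Us). \<Sum>a<d'. \<Sum>c<d'. (sg (bs ! q) * tau d d' \<rho> (proj (d*d') Us bs) a c) * P' $$ (c,a))"
    by (simp add: sum_distrib_left mult.assoc)
  also have "\<dots> = (\<Sum>a<d'. \<Sum>c<d'. \<Sum>bs\<in>lenset (length Us). (sg (bs ! q) * tau d d' \<rho> (proj (d*d') Us bs) a c) * P' $$ (c,a))"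
    by (rule sum3_swap[symmetric])
  also have "\<dots> = (\<Sum>a<d'. \<Sum>c<d'. (\<Sum>x<d. \<Sum>y<d. \<rho> $$ (x,y) * (\<Sum>bs\<in>lenset (length Us). sg (bs ! q) * proj (d*d') Us bs $$ (x*d'+a, y*d'+c))) * P' $$ (c,a))"
    by (simp only: sum_distrib_right[symmetric] tau_lin)
  also have "\<dots> = (\<Sum>a<d'. \<Sum>c<d'. (\<Sum>x<d. \<Sum>y<d. \<rho> $$ (x,y) * (cnj (P $$ (x,y)) * P' $$ (a,c))) * P' $$ (c,a))"
  proof (intro sum.cong refl arg_cong2[where f = "(*)"])
    fix a c x y assume a: "a \<in> {..<d'}" and c: "c \<in> {..<d'}" and x: "x \<in> {..<d}" and y: "y \<in> {..<d}"
    have d'0: "d' > 0" using a by auto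
    have "(\<Sum>bs\<in>lenset (length Us). sg (bs ! q) * proj (d*d') Us bs $$ (x*d'+a, y*d'+c)) = (Us ! q) $$ (x*d'+a, y*d'+c)"
      using proj_sum_sg[OF Us idx_lt idx_lt q] a c x y by simp
    also have "\<dots> = cnj (P $$ (x,y)) * P' $$ (a,c)"
      unfolding Uq using Pc P' a c x y idx_lt[of x d a d'] idx_lt[of y d c d'] d'0
      by (simp add: cmat_def)
    finally show "(\<Sum>bs\<in>lenset (length Us). sg (bs ! q) * proj (d*d') Us bs $$ (x*d'+a, y*d'+c)) = cnj (P $$ (x,y)) * P' $$ (a,c)" .
  qed
  also have "\<dots> = (\<Sum>x<d. \<Sum>y<d. \<rho> $$ (x,y) * P $$ (y,x)) * (\<Sum>a<d'. \<Sum>c<d'. P' $$ (a,c) * P' $$ (c,a))"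
  proof -
    have h: "cnj (P $$ (x,y)) = P $$ (y,x)" if "x < d" "y < d" for x y
      using herm_entry[OF P that(2) that(1)] by simp
    have "(\<Sum>a<d'. \<Sum>c<d'. (\<Sum>x<d. \<Sum>y<d. \<rho> $$ (x,y) * (cnj (P $$ (x,y)) * P' $$ (a,c))) * P' $$ (c,a))
       = (\<Sum>a<d'. \<Sum>c<d'. (\<Sum>x<d. \<Sum>y<d. \<rho> $$ (x,y) * P $$ (y,x)) * (P' $$ (a,c) * P' $$ (c,a)))"
      by (intro sum.cong refl) (simp add: h sum_distrib_right sum_distrib_left ac_simps)
    then show ?thesis by (simp add: sum_distrib_left)
  qed
  also have "(\<Sum>x<d. \<Sum>y<d. \<rho> $$ (x,y) * P $$ (y,x)) = mat_trace (\<rho> * P)"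
    using trace_expand[OF density_parts(1)[OF \<rho>] Pc] by simp
  also have "(\<Sum>a<d'. \<Sum>c<d'. P' $$ (a,c) * P' $$ (c,a)) = of_nat d'"
    using trace_expand[OF P' P'] PP by (simp add: mat_trace_def)
  finally show ?thesis by simp
qed



lemma jensen_sq:
  fixes c a :: "'x \<Rightarrow> real"
  assumes "finite A" "\<And>i. i \<in> A \<Longrightarrow> c i \<ge> 0" "sum c A = 1"
  shows "(\<Sum>i\<in>A. c i * a i)\<^sup>2 \<le> (\<Sum>i\<in>A. c i * (a i)\<^sup>2)"
proof -
  define m where "m = (\<Sum>i\<in>A. c i * a i)"
  have "0 \<le> (\<Sum>i\<in>A. c i * (a i - m)\<^sup>2)" using assms(2) by (intro sum_nonneg) simp
  also have "(\<Sum>i\<in>A. c i * (a i - m)\<^sup>2) = (\<Sum>i\<in>A. c i * (a i)\<^sup>2) - 2 * m * (\<Sum>i\<in>A. c i * a i) + m\<^sup>2 * (\<Sum>i\<in>A. c i)"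
    by (simp add: power2_eq_square algebra_simps sum.distrib sum_subtractf sum_distrib_left)
  finally show ?thesis using assms(3) unfolding m_def[symmetric] by (simp add: power2_eq_square)
qed

lemma scaled_density:
  assumes f: "psdf m f" and h: "\<And>a c. a < m \<Longrightarrow> c < m \<Longrightarrow> f a c = cnj (f c a)"
    and p: "p = Re (\<Sum>a<m. f a a)" and p0: "p > 0"
  shows "density_matrix m (mat m m (\<lambda>(a,c). f a c / complex_of_real p))"
  unfolding density_matrix_def Let_def
proof (intro conjI allI impI)
  let ?s = "mat m m (\<lambda>(a,c). f a c / complex_of_real p)"
  show "?s \<in> carrier_mat m m" by simp
  fix i j assume "i < m" "j < m"
  then show "?s $$ (i,j) = cnj (?s $$ (j,i))" using h[of i j] by simp
next
  let ?s = "mat m m (\<lambda>(a,c). f a c / complex_of_real p)"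
  fix v :: "nat \<Rightarrow> complex"
  have "(\<Sum>i<m. \<Sum>j<m. cnj (v i) * ?s $$ (i,j) * v j) = (\<Sum>i<m. \<Sum>j<m. cnj (v i) * f i j * v j) / complex_of_real p"
    by (simp add: sum_divide_distrib)
  moreover have "Im (\<Sum>i<m. \<Sum>j<m. cnj (v i) * f i j * v j) = 0" "Re (\<Sum>i<m. \<Sum>j<m. cnj (v i) * f i j * v j) \<ge> 0"
    using f unfolding psdf_def by blast+
  ultimately show "Im (\<Sum>i<m. \<Sum>j<m. cnj (v i) * ?s $$ (i,j) * v j) = 0"
       "0 \<le> Re (\<Sum>i<m. \<Sum>j<m. cnj (v i) * ?s $$ (i,j) * v j)"
    using p0 by (simp_all add: Im_divide_of_real Re_divide_of_real)
next
  let ?s = "mat m m (\<lambda>(a,c). f a c / complex_of_real p)"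
  have im: "Im (f a a) = 0" if "a < m" for a
  proof -
    have "f a a = cnj (f a a)" using h[OF that that] .
    then show ?thesis by (metis Reals_cnj_iff complex_is_Real_iff)
  qed
  have "(\<Sum>a<m. f a a) = complex_of_real p"
    unfolding p by (rule complex_eqI) (simp_all add: Im_sum im)
  then show "mat_trace ?s = 1"
    unfolding mat_trace_def using p0 by (simp add: sum_divide_distrib[symmetric])
qed

lemma scaled_expect:
  assumes X: "X \<in> carrier_mat m m"
  shows "expect (mat m m (\<lambda>(a,c). f a c / complex_of_real p)) X = Re (\<Sum>a<m. \<Sum>c<m. f a c * X $$ (c,a)) / p"
proof -
  have c: "mat m m (\<lambda>(a,c). f a c / complex_of_real p) \<in> carrier_mat m m" by simp
  show ?thesis unfolding expect_def trace_expand[OF c X]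
    by (simp add: sum_divide_distrib[symmetric] Re_divide_of_real)
qed


lemma realization_len: "realization G S \<Longrightarrow> \<exists>l. \<forall>i. length (S i) = l"
  unfolding realization_def by blast

lemma realization_comm: "realization G S \<Longrightarrow>
   (G i j \<longrightarrow> pauli_string_mat (S i) * pauli_string_mat (S j) = - (pauli_string_mat (S j) * pauli_string_mat (S i))) \<and>
   (\<not> G i j \<longrightarrow> pauli_string_mat (S i) * pauli_string_mat (S j) = pauli_string_mat (S j) * pauli_string_mat (S i))"
  unfolding realization_def by blast

lemma psm_herm': "herm (2^length s) (pauli_string_mat s)"
  unfolding herm_def using psm_carrier psm_herm by blast

lemma transfer:
  fixes S S' :: "'n::finite \<Rightarrow> pauli list"
  assumes RS: "realization G S" and RS': "realization G S'"
  shows "down_closure (Qset S) \<subseteq> convex hull (down_closure (Qset S'))"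
proof
  obtain l where l: "\<And>i. length (S i) = l" using realization_len[OF RS] by blast
  obtain l' where l': "\<And>i. length (S' i) = l'" using realization_len[OF RS'] by blast
  define d where "d = (2::nat)^l"
  define d' where "d' = (2::nat)^l'"
  define N where "N = d * d'"
  have d'0: "d' > 0" unfolding d'_def by simp
  define P where "P i = pauli_string_mat (S i)" for i
  define P' where "P' i = pauli_string_mat (S' i)" for i
  have Pc: "P i \<in> carrier_mat d d" for i unfolding P_def d_def using psm_carrier[of "S i"] l by simp
  have P'c: "P' i \<in> carrier_mat d' d'" for i unfolding P'_def d'_def using psm_carrier[of "S' i"] l' by simp
  have Ph: "herm d (P i)" for i unfolding P_def d_def using psm_herm'[of "S i"] l by simp
  have P'h: "herm d' (P' i)" for i unfolding P'_def d'_def using psm_herm'[of "S' i"] l' by simp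
  have P'P': "P' i * P' i = 1\<^sub>m d'" for i unfolding P'_def d'_def using psm_sq[of "S' i"] l' by simp
  obtain vs :: "'n list" where vs: "set vs = UNIV" "distinct vs"
    using finite_distinct_list[of "UNIV :: 'n set"] by auto
  define K where "K = length vs"
  define Us where "Us = map (\<lambda>i. Umat (S i) (S' i)) vs"
  have lenUs: "length Us = K" unfolding Us_def K_def by simp
  have Umat_i: "Umat (S i) (S' i) = kron (cmat (P i)) (P' i)" for i unfolding Umat_def P_def P'_def ..
  have Uc1: "Umat (S i) (S' i) \<in> carrier_mat N N" for i
    using Umat_carrier[of "S i" "S' i"] unfolding N_def d_def d'_def l l' .
  have Uh1: "herm N (Umat (S i) (S' i))" for i
    using Umat_herm[of "S i" "S' i"] unfolding N_def d_def d'_def l l' .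
  have Us1: "Umat (S i) (S' i) * Umat (S i) (S' i) = 1\<^sub>m N" for i
    using Umat_sq[of "S i" "S' i"] unfolding N_def d_def d'_def l l' .
  have Ucar: "set Us \<subseteq> carrier_mat N N"
    unfolding Us_def using Uc1 by auto
  have Uprops: "\<forall>U\<in>set Us. herm N U \<and> U * U = 1\<^sub>m N"
    unfolding Us_def using Uh1 Us1 by auto
  have Ucomm: "\<forall>U\<in>set Us. \<forall>V\<in>set Us. U * V = V * U"
  proof (intro ballI)
    fix U V assume "U \<in> set Us" "V \<in> set Us"
    then obtain i j where U: "U = Umat (S i) (S' i)" and V: "V = Umat (S j) (S' j)" unfolding Us_def by auto
    show "U * V = V * U" unfolding U V
      by (rule Umat_comm) (use l l' realization_comm[OF RS, of i j] realization_comm[OF RS', of i j] in auto)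
  qed
  define pos where "pos i = (SOME p. p < K \<and> vs ! p = i)" for i
  have pos: "pos i < K \<and> vs ! pos i = i" for i
  proof -
    have "\<exists>p. p < K \<and> vs ! p = i" using vs(1) unfolding K_def by (metis UNIV_I in_set_conv_nth)
    then show ?thesis unfolding pos_def by (rule someI_ex)
  qed
  have Upos: "Us ! pos i = kron (cmat (P i)) (P' i)" for i
    using pos[of i] unfolding Us_def K_def by (simp add: Umat_i)
  define Pm where "Pm bs = proj N Us bs" for bs
  have PmH: "herm N (Pm bs)" "Pm bs * Pm bs = Pm bs" for bs
    using proj_herm_idem[OF Uprops Ucomm] unfolding Pm_def by auto
  fix x assume "x \<in> down_closure (Qset S)"
  then obtain y \<rho> where xy: "\<And>i. x $ i \<le> y $ i" and \<rho>: "\<And>i. density_matrix (2 ^ length (S i)) \<rho>"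
    and y: "\<And>i. y $ i = (expect \<rho> (pauli_string_mat (S i)))\<^sup>2"
    unfolding down_closure_def Qset_def by blast
  have \<rho>d: "density_matrix d \<rho>" using \<rho>[of undefined] l unfolding d_def by simp
  define \<tau> where "\<tau> bs = tau d d' \<rho> (Pm bs)" for bs
  define p where "p bs = Re (\<Sum>a<d'. \<tau> bs a a)" for bs
  define t where "t bs i = Re (\<Sum>a<d'. \<Sum>c<d'. \<tau> bs a c * P' i $$ (c,a))" for bs i
  have psd: "psdf d' (\<tau> bs)" for bs
    unfolding \<tau>_def using tau_psd[OF \<rho>d, of d' "Pm bs"] PmH unfolding N_def by simp
  have \<tau>h: "\<tau> bs a c = cnj (\<tau> bs c a)" if "a < d'" "c < d'" for bs a c
    unfolding \<tau>_def using tau_herm[OF \<rho>d _ that] PmH unfolding N_def by simp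
  have tb: "\<bar>t bs i\<bar> \<le> p bs" for bs i
    unfolding t_def p_def by (rule tr_bound[OF psd P'h P'P'])
  have p0: "p bs \<ge> 0" for bs using tb[of bs undefined] by linarith
  define B where "B = lenset K"
  have finB: "finite B" unfolding B_def by simp
  have sump: "(\<Sum>bs\<in>B. p bs) = real d'"
  proof -
    have "(\<Sum>bs\<in>B. \<Sum>a<d'. \<tau> bs a a) = of_nat d'"
      unfolding B_def \<tau>_def Pm_def N_def lenUs[symmetric] by (rule sum_tau_trace[OF \<rho>d Ucar[unfolded N_def]])
    then show ?thesis unfolding p_def Re_sum[symmetric] by simp
  qed
  have sumt: "(\<Sum>bs\<in>B. Re (sg (bs ! pos i)) * t bs i) = real d' * expect \<rho> (P i)" for i
  proof -
    have "(\<Sum>bs\<in>B. sg (bs ! pos i) * (\<Sum>a<d'. \<Sum>c<d'. \<tau> bs a c * P' i $$ (c,a))) = of_nat d' * mat_trace (\<rho> * P i)"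
      unfolding B_def \<tau>_def Pm_def N_def lenUs[symmetric]
      by (rule sum_tau_sg[OF \<rho>d Ucar[unfolded N_def] _ Upos Ph P'c P'P']) (use pos lenUs in auto)
    note eq = this
    have hsg: "Re (sg b * z) = Re (sg b) * Re z" for b z by (simp add: sg_def)
    have "(\<Sum>bs\<in>B. Re (sg (bs ! pos i)) * t bs i) = Re (\<Sum>bs\<in>B. sg (bs ! pos i) * (\<Sum>a<d'. \<Sum>c<d'. \<tau> bs a c * P' i $$ (c,a)))"
      unfolding t_def by (simp only: Re_sum hsg)
    also have "\<dots> = real d' * expect \<rho> (P i)" unfolding eq by (simp add: expect_def)
    finally show ?thesis .
  qed
  define Bp where "Bp = {bs\<in>B. p bs > 0}"
  have finBp: "finite Bp" "Bp \<subseteq> B" unfolding Bp_def using finB by auto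
  have pz: "p bs = 0" if "bs \<in> B - Bp" for bs using that p0[of bs] unfolding Bp_def by auto
  have tz: "t bs i = 0" if "bs \<in> B - Bp" for bs i using tb[of bs i] pz[OF that] by simp
  have sumpBp: "(\<Sum>bs\<in>Bp. p bs) = real d'"
    using sum.mono_neutral_left[OF finB finBp(2), of p] pz sump by simp
  have sumtBp: "(\<Sum>bs\<in>Bp. Re (sg (bs ! pos i)) * t bs i) = real d' * expect \<rho> (P i)" for i
    using sum.mono_neutral_left[OF finB finBp(2), of "\<lambda>bs. Re (sg (bs ! pos i)) * t bs i"] tz sumt[of i] by simp
  define c where "c bs = p bs / real d'" for bs
  have c0: "c bs \<ge> 0" for bs unfolding c_def using p0[of bs] by simp
  have csum: "(\<Sum>bs\<in>Bp. c bs) = 1" unfolding c_def using sumpBp d'0 by (simp add: sum_divide_distrib[symmetric])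
  define \<sigma> where "\<sigma> bs = mat d' d' (\<lambda>(a,c). \<tau> bs a c / complex_of_real (p bs))" for bs
  have \<sigma>d: "density_matrix d' (\<sigma> bs)" if "bs \<in> Bp" for bs
    unfolding \<sigma>_def by (rule scaled_density[OF psd \<tau>h p_def]) (use that in \<open>auto simp: Bp_def\<close>)
  have \<sigma>e: "expect (\<sigma> bs) (P' i) = t bs i / p bs" for bs i
    unfolding \<sigma>_def t_def by (rule scaled_expect[OF P'c])
  define z where "z bs = (\<chi> i. (t bs i / p bs)\<^sup>2)" for bs
  have zQ: "z bs \<in> Qset S'" if "bs \<in> Bp" for bs
    unfolding Qset_def
  proof (intro CollectI exI[of _ "\<sigma> bs"] conjI allI)
    fix i
    show "density_matrix (2 ^ length (S' i)) (\<sigma> bs)" using \<sigma>d[OF that] l' unfolding d'_def by simp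
    show "z bs $ i = (expect (\<sigma> bs) (pauli_string_mat (S' i)))\<^sup>2"
      unfolding z_def using \<sigma>e[of bs i] unfolding P'_def by simp
  qed
  have sgsq: "(Re (sg b))\<^sup>2 = 1" for b by (simp add: sg_def)
  have ineq: "x $ i \<le> (\<Sum>bs\<in>Bp. c bs * z bs $ i)" for i
  proof -
    define a where "a bs = Re (sg (bs ! pos i)) * t bs i / p bs" for bs
    have "expect \<rho> (P i) = (\<Sum>bs\<in>Bp. Re (sg (bs ! pos i)) * t bs i) / real d'"
      using sumtBp[of i] d'0 by simp
    also have "\<dots> = (\<Sum>bs\<in>Bp. c bs * a bs)"
      unfolding sum_divide_distrib c_def a_def
      by (intro sum.cong refl) (use Bp_def in auto)
    finally have E: "expect \<rho> (P i) = (\<Sum>bs\<in>Bp. c bs * a bs)" .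
    have "x $ i \<le> (expect \<rho> (P i))\<^sup>2" using xy[of i] y[of i] unfolding P_def by simp
    also have "\<dots> \<le> (\<Sum>bs\<in>Bp. c bs * (a bs)\<^sup>2)" unfolding E
      by (rule jensen_sq[OF finBp(1) _ csum]) (use c0 in auto)
    also have "\<dots> = (\<Sum>bs\<in>Bp. c bs * z bs $ i)"
      unfolding a_def z_def by (intro sum.cong refl) (simp add: power_mult_distrib power_divide sgsq)
    finally show ?thesis .
  qed
  define \<delta> where "\<delta> = (\<Sum>bs\<in>Bp. c bs *\<^sub>R z bs) - x"
  have \<delta>0: "\<delta> $ i \<ge> 0" for i
    using ineq[of i] unfolding \<delta>_def by (simp add: sum_component)
  have xeq: "x = (\<Sum>bs\<in>Bp. c bs *\<^sub>R (z bs - \<delta>))"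
  proof -
    have "(\<Sum>bs\<in>Bp. c bs *\<^sub>R (z bs - \<delta>)) = (\<Sum>bs\<in>Bp. c bs *\<^sub>R z bs) - (\<Sum>bs\<in>Bp. c bs) *\<^sub>R \<delta>"
      by (simp add: scaleR_diff_right sum_subtractf scaleR_sum_left)
    then show ?thesis unfolding csum \<delta>_def by simp
  qed
  have zd: "z bs - \<delta> \<in> down_closure (Qset S')" if "bs \<in> Bp" for bs
    unfolding down_closure_def using zQ[OF that] \<delta>0 by force
  show "x \<in> convex hull (down_closure (Qset S'))"
    unfolding xeq
    by (rule convex_sum[OF finBp(1) convex_convex_hull csum]) (auto simp: c0 intro!: hull_inc zd)
qed



lemma subseq_conv:
  fixes f :: "nat \<Rightarrow> 'i \<Rightarrow> complex"
  assumes "finite I" "\<And>k p. p \<in> I \<Longrightarrow> norm (f k p) \<le> B"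
  shows "\<exists>r. strict_mono r \<and> (\<forall>p\<in>I. convergent (\<lambda>k. f (r k) p))"
  using assms
proof (induction I rule: finite_induct)
  case empty
  have "strict_mono (id :: nat \<Rightarrow> nat)" by (simp add: strict_mono_def)
  then show ?case by blast
next
  case (insert p I)
  obtain r1 where r1: "strict_mono r1" "\<forall>q\<in>I. convergent (\<lambda>k. f (r1 k) q)"
    using insert.IH insert.prems by blast
  have "seq_compact (cball (0::complex) B)" by (rule compact_imp_seq_compact[OF compact_cball])
  moreover have "\<forall>k. f (r1 k) p \<in> cball 0 B" using insert.prems by simp
  ultimately obtain L r2 where r2: "strict_mono r2" "((\<lambda>k. f (r1 k) p) \<circ> r2) \<longlonglongrightarrow> L"
    by (rule seq_compactE)
  have "strict_mono (r1 \<circ> r2)" using r1(1) r2(1) by (rule strict_mono_o)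
  moreover have "convergent (\<lambda>k. f ((r1 \<circ> r2) k) q)" if "q \<in> insert p I" for q
  proof (cases "q = p")
    case True then show ?thesis using r2(2) by (auto simp: convergent_def o_def)
  next
    case False
    then have "q \<in> I" using that by simp
    then obtain L' where "(\<lambda>k. f (r1 k) q) \<longlonglongrightarrow> L'" using r1(2) by (auto simp: convergent_def)
    then have "((\<lambda>k. f (r1 k) q) \<circ> r2) \<longlonglongrightarrow> L'" using r2(1) by (rule LIMSEQ_subseq_LIMSEQ)
    then show ?thesis by (auto simp: convergent_def o_def)
  qed
  ultimately show ?case by blast
qed

lemma sum_two:
  fixes a b d :: nat
  assumes "a < d" "b < d" "a \<noteq> b" "\<And>i. i < d \<Longrightarrow> i \<noteq> a \<Longrightarrow> i \<noteq> b \<Longrightarrow> g i = 0"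
  shows "(\<Sum>i<d. g i) = g a + (g b :: complex)"
proof -
  have "(\<Sum>i<d. g i) = (\<Sum>i\<in>{a,b}. g i)"
    by (rule sum.mono_neutral_right) (use assms in auto)
  then show ?thesis using assms(3) by simp
qed

lemma sum_one:
  fixes a d :: nat
  assumes "a < d" "\<And>i. i < d \<Longrightarrow> i \<noteq> a \<Longrightarrow> g i = 0"
  shows "(\<Sum>i<d. g i) = (g a :: complex)"
proof -
  have "(\<Sum>i<d. g i) = (\<Sum>i\<in>{a}. g i)"
    by (rule sum.mono_neutral_right) (use assms in auto)
  then show ?thesis by simp
qed

lemma density_diag:
  assumes \<rho>: "density_matrix d \<rho>" and a: "a < d"
  shows "Im (\<rho> $$ (a,a)) = 0" "Re (\<rho> $$ (a,a)) \<ge> 0"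
proof -
  define v where "v i = (if i = a then 1 else (0::complex))" for i
  have "(\<Sum>i<d. \<Sum>j<d. cnj (v i) * \<rho> $$ (i,j) * v j) = (\<Sum>j<d. cnj (v a) * \<rho> $$ (a,j) * v j)"
    by (rule sum_one[OF a]) (simp add: v_def)
  also have "\<dots> = cnj (v a) * \<rho> $$ (a,a) * v a"
    by (rule sum_one[OF a]) (simp add: v_def)
  finally have "(\<Sum>i<d. \<Sum>j<d. cnj (v i) * \<rho> $$ (i,j) * v j) = \<rho> $$ (a,a)" by (simp add: v_def)
  moreover have "Im (\<Sum>i<d. \<Sum>j<d. cnj (v i) * \<rho> $$ (i,j) * v j) = 0 \<and> Re (\<Sum>i<d. \<Sum>j<d. cnj (v i) * \<rho> $$ (i,j) * v j) \<ge> 0"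
    using density_psdf[OF \<rho>] unfolding psdf_def by blast
  ultimately show "Im (\<rho> $$ (a,a)) = 0" "Re (\<rho> $$ (a,a)) \<ge> 0" by auto
qed

lemma density_diag_le:
  assumes \<rho>: "density_matrix d \<rho>" and a: "a < d"
  shows "Re (\<rho> $$ (a,a)) \<le> 1"
proof -
  have "(\<Sum>i<d. \<rho> $$ (i,i)) = 1" using density_parts(1,3)[OF \<rho>] by (simp add: mat_trace_def)
  then have "(\<Sum>i<d. Re (\<rho> $$ (i,i))) = 1" by (metis Re_sum one_complex.sel)
  moreover have "Re (\<rho> $$ (a,a)) \<le> (\<Sum>i<d. Re (\<rho> $$ (i,i)))"
    by (rule member_le_sum) (use a density_diag(2)[OF \<rho>] in auto)
  ultimately show ?thesis by simp
qed

lemma density_entry_bound: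
  assumes \<rho>: "density_matrix d \<rho>" and a: "a < d" and b: "b < d"
  shows "norm (\<rho> $$ (a,b)) \<le> 1"
proof (cases "a = b")
  case True
  then show ?thesis using density_diag[OF \<rho> a] density_diag_le[OF \<rho> a]
    by (simp add: cmod_eq_Re)
next
  case ab: False
  define z where "z = \<rho> $$ (a,b)"
  show ?thesis
  proof (cases "z = 0")
    case True then show ?thesis unfolding z_def by simp
  next
    case False
    define u where "u = - cnj z / complex_of_real (cmod z)"
    have n0: "cmod z > 0" using False by simp
    have zc: "z * cnj z = complex_of_real ((cmod z)\<^sup>2)" using complex_norm_square[of z] by simp
    have "u * z = - (z * cnj z) / complex_of_real (cmod z)" unfolding u_def by (simp add: ac_simps)
    also have "\<dots> = - complex_of_real ((cmod z)\<^sup>2) / complex_of_real (cmod z)" unfolding zc ..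
    also have "\<dots> = - complex_of_real (cmod z)" using n0 by (simp add: power2_eq_square)
    finally have uz: "u * z = - complex_of_real (cmod z)" .
    have "cnj u * u = (z * cnj z) / (complex_of_real (cmod z) * complex_of_real (cmod z))" unfolding u_def by (simp add: ac_simps)
    also have "\<dots> = 1" unfolding zc using n0 by (simp add: power2_eq_square)
    finally have uu: "cnj u * u = 1" .
    have ba: "\<rho> $$ (b,a) = cnj z" unfolding z_def using density_parts(2)[OF \<rho> b a] .
    define v where "v i = (if i = a then 1 else if i = b then u else 0)" for i
    have q: "(\<Sum>i<d. \<Sum>j<d. cnj (v i) * \<rho> $$ (i,j) * v j)
       = (\<Sum>j<d. cnj (v a) * \<rho> $$ (a,j) * v j) + (\<Sum>j<d. cnj (v b) * \<rho> $$ (b,j) * v j)"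
      by (rule sum_two[OF a b ab]) (simp add: v_def)
    also have "\<dots> = (cnj (v a) * \<rho> $$ (a,a) * v a + cnj (v a) * \<rho> $$ (a,b) * v b)
                  + (cnj (v b) * \<rho> $$ (b,a) * v a + cnj (v b) * \<rho> $$ (b,b) * v b)"
      by (intro arg_cong2[where f = "(+)"] sum_two[OF a b ab]) (simp_all add: v_def)
    also have "\<dots> = \<rho> $$ (a,a) + \<rho> $$ (b,b) + (u * z + cnj (u * z))"
      using ab uu unfolding v_def ba z_def by (simp add: algebra_simps)
    also have "\<dots> = \<rho> $$ (a,a) + \<rho> $$ (b,b) - 2 * complex_of_real (cmod z)"
      using uz by simp
    finally have qe: "(\<Sum>i<d. \<Sum>j<d. cnj (v i) * \<rho> $$ (i,j) * v j) = \<rho> $$ (a,a) + \<rho> $$ (b,b) - 2 * complex_of_real (cmod z)" .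
    have "Re (\<Sum>i<d. \<Sum>j<d. cnj (v i) * \<rho> $$ (i,j) * v j) \<ge> 0"
      using density_psdf[OF \<rho>] unfolding psdf_def by blast
    then have "2 * cmod z \<le> Re (\<rho> $$ (a,a)) + Re (\<rho> $$ (b,b))" unfolding qe by simp
    moreover have "Re (\<rho> $$ (a,a)) \<le> 1" "Re (\<rho> $$ (b,b)) \<le> 1" using density_diag_le[OF \<rho>] a b by auto
    ultimately show ?thesis unfolding z_def by simp
  qed
qed


lemma density_limit:
  assumes R: "\<And>k. density_matrix d (R k)" and conv: "\<And>a b. a < d \<Longrightarrow> b < d \<Longrightarrow> (\<lambda>k. R k $$ (a,b)) \<longlonglongrightarrow> L a b"
  shows "density_matrix d (mat d d (\<lambda>(a,b). L a b))"
  unfolding density_matrix_def Let_def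
proof (intro conjI allI impI)
  let ?M = "mat d d (\<lambda>(a,b). L a b)"
  show "?M \<in> carrier_mat d d" by simp
  fix i j assume i: "i < d" and j: "j < d"
  have "(\<lambda>k. R k $$ (i,j)) = (\<lambda>k. cnj (R k $$ (j,i)))" using density_parts(2)[OF R i j] by simp
  then have "(\<lambda>k. R k $$ (i,j)) \<longlonglongrightarrow> cnj (L j i)" using tendsto_cnj[OF conv[OF j i]] by simp
  then have "L i j = cnj (L j i)" using conv[OF i j] LIMSEQ_unique by blast
  then show "?M $$ (i,j) = cnj (?M $$ (j,i))" using i j by simp
next
  let ?M = "mat d d (\<lambda>(a,b). L a b)"
  fix v :: "nat \<Rightarrow> complex"
  define q where "q k = (\<Sum>i<d. \<Sum>j<d. cnj (v i) * R k $$ (i,j) * v j)" for k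
  have qlim: "q \<longlonglongrightarrow> (\<Sum>i<d. \<Sum>j<d. cnj (v i) * L i j * v j)"
    unfolding q_def by (intro tendsto_sum tendsto_mult tendsto_const conv) auto
  have Q: "(\<Sum>i<d. \<Sum>j<d. cnj (v i) * ?M $$ (i,j) * v j) = (\<Sum>i<d. \<Sum>j<d. cnj (v i) * L i j * v j)"
    by (intro sum.cong refl) simp
  have qk: "Im (q k) = 0 \<and> Re (q k) \<ge> 0" for k
    using density_psdf[OF R] unfolding psdf_def q_def by blast
  have "(\<lambda>k. Im (q k)) \<longlonglongrightarrow> Im (\<Sum>i<d. \<Sum>j<d. cnj (v i) * L i j * v j)" by (rule tendsto_Im[OF qlim])
  moreover have "(\<lambda>k. Im (q k)) = (\<lambda>k. 0)" by (rule ext) (use qk in blast)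
  ultimately have "(\<lambda>k. 0::real) \<longlonglongrightarrow> Im (\<Sum>i<d. \<Sum>j<d. cnj (v i) * L i j * v j)" by simp
  then have "0 = Im (\<Sum>i<d. \<Sum>j<d. cnj (v i) * L i j * v j)" by (rule LIMSEQ_unique[OF tendsto_const])
  then have "Im (\<Sum>i<d. \<Sum>j<d. cnj (v i) * L i j * v j) = 0" by simp
  moreover have "Re (\<Sum>i<d. \<Sum>j<d. cnj (v i) * L i j * v j) \<ge> 0"
    by (rule LIMSEQ_le_const[OF tendsto_Re[OF qlim]]) (use qk in auto)
  ultimately show "Im (\<Sum>i<d. \<Sum>j<d. cnj (v i) * ?M $$ (i,j) * v j) = 0"
    "0 \<le> Re (\<Sum>i<d. \<Sum>j<d. cnj (v i) * ?M $$ (i,j) * v j)" unfolding Q by auto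
next
  let ?M = "mat d d (\<lambda>(a,b). L a b)"
  have t: "(\<Sum>a<d. R k $$ (a,a)) = 1" for k using density_parts(1,3)[OF R[of k]] by (simp add: mat_trace_def)
  have "(\<lambda>k. \<Sum>a<d. R k $$ (a,a)) \<longlonglongrightarrow> (\<Sum>a<d. L a a)"
    by (intro tendsto_sum conv) auto
  then have "(\<lambda>k. 1::complex) \<longlonglongrightarrow> (\<Sum>a<d. L a a)" unfolding t .
  then have "1 = (\<Sum>a<d. L a a)" by (rule LIMSEQ_unique[OF tendsto_const])
  then have "(\<Sum>a<d. L a a) = 1" by simp
  then show "mat_trace ?M = 1" by (simp add: mat_trace_def)
qed

lemma expect_limit:
  assumes R: "\<And>k. R k \<in> carrier_mat d d" and P: "P \<in> carrier_mat d d"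
    and conv: "\<And>a b. a < d \<Longrightarrow> b < d \<Longrightarrow> (\<lambda>k. R k $$ (a,b)) \<longlonglongrightarrow> L a b"
  shows "(\<lambda>k. expect (R k) P) \<longlonglongrightarrow> expect (mat d d (\<lambda>(a,b). L a b)) P"
proof -
  have c: "mat d d (\<lambda>(a,b). L a b) \<in> carrier_mat d d" by simp
  have e: "expect (mat d d (\<lambda>(a,b). L a b)) P = Re (\<Sum>a<d. \<Sum>c<d. L a c * P $$ (c,a))"
    unfolding expect_def trace_expand[OF c P] by (intro arg_cong[where f = Re] sum.cong refl) auto
  show ?thesis unfolding e unfolding expect_def trace_expand[OF R P]
    by (intro tendsto_Re tendsto_sum tendsto_mult tendsto_const conv) auto
qed

lemma density_exists: "d > 0 \<Longrightarrow> density_matrix d (mat d d (\<lambda>(i,j). if i = 0 \<and> j = 0 then 1 else 0))"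
  unfolding density_matrix_def Let_def
proof (intro conjI allI impI)
  assume d: "d > 0"
  let ?M = "mat d d (\<lambda>(i,j). if i = 0 \<and> j = 0 then 1 else (0::complex))"
  show "?M \<in> carrier_mat d d" by simp
  fix i j assume "i < d" "j < d" then show "?M $$ (i,j) = cnj (?M $$ (j,i))" by auto
next
  assume d: "d > 0"
  let ?M = "mat d d (\<lambda>(i,j). if i = 0 \<and> j = 0 then 1 else (0::complex))"
  fix v :: "nat \<Rightarrow> complex"
  have "(\<Sum>i<d. \<Sum>j<d. cnj (v i) * ?M $$ (i,j) * v j) = (\<Sum>j<d. cnj (v 0) * ?M $$ (0,j) * v j)"
    by (rule sum_one[OF d]) simp
  also have "\<dots> = cnj (v 0) * ?M $$ (0,0) * v 0" by (rule sum_one[OF d]) simp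
  also have "\<dots> = complex_of_real ((cmod (v 0))\<^sup>2)" using d complex_norm_square[of "v 0"] by (simp add: mult.commute)
  finally show "Im (\<Sum>i<d. \<Sum>j<d. cnj (v i) * ?M $$ (i,j) * v j) = 0"
    "0 \<le> Re (\<Sum>i<d. \<Sum>j<d. cnj (v i) * ?M $$ (i,j) * v j)" by simp_all
next
  assume d: "d > 0"
  let ?M = "mat d d (\<lambda>(i,j). if i = 0 \<and> j = 0 then 1 else (0::complex))"
  have "(\<Sum>i<d. ?M $$ (i,i)) = ?M $$ (0,0)" by (rule sum_one[OF d]) simp
  then show "mat_trace ?M = 1" using d by (simp add: mat_trace_def)
qed



lemma attain:
  fixes P :: "'n::finite \<Rightarrow> complex mat" and w :: "real ^ 'n"
  assumes Ph: "\<And>i. herm d (P i)" and PP: "\<And>i. P i * P i = 1\<^sub>m d" and d: "d > 0"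
  shows "\<exists>\<rho>0. density_matrix d \<rho>0 \<and>
           (\<forall>\<rho>. density_matrix d \<rho> \<longrightarrow> (\<Sum>i\<in>UNIV. w $ i * (expect \<rho> (P i))\<^sup>2) \<le> (\<Sum>i\<in>UNIV. w $ i * (expect \<rho>0 (P i))\<^sup>2))"
proof -
  define f where "f \<rho> = (\<Sum>i\<in>UNIV. w $ i * (expect \<rho> (P i))\<^sup>2)" for \<rho>
  define F where "F = f ` {\<rho>. density_matrix d \<rho>}"
  have Fne: "F \<noteq> {}" unfolding F_def using density_exists[OF d] by blast
  have fb: "f \<rho> \<le> (\<Sum>i\<in>UNIV. \<bar>w $ i\<bar>)" if "density_matrix d \<rho>" for \<rho>
    unfolding f_def
  proof (rule sum_mono)
    fix i
    have "\<bar>expect \<rho> (P i)\<bar> \<le> 1" by (rule expect_bound[OF that Ph PP])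
    then have "(expect \<rho> (P i))\<^sup>2 \<le> 1" by (simp add: abs_square_le_1)
    moreover have "(expect \<rho> (P i))\<^sup>2 \<ge> 0" by simp
    ultimately show "w $ i * (expect \<rho> (P i))\<^sup>2 \<le> \<bar>w $ i\<bar>"
      by (metis abs_ge_self abs_mult abs_of_nonneg mult_le_cancel_left1 order.trans mult.commute mult_right_le_one_le abs_ge_zero)
  qed
  have Fbdd: "bdd_above F" unfolding F_def using fb by (intro bdd_aboveI) blast
  define M where "M = Sup F"
  have "\<exists>\<rho>. density_matrix d \<rho> \<and> M - 1 / (real k + 1) < f \<rho>" for k
  proof -
    have "M - 1 / (real k + 1) < M" by simp
    then obtain x where "x \<in> F" "M - 1 / (real k + 1) < x" unfolding M_def using less_cSup_iff[OF Fne Fbdd] by blast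
    then show ?thesis unfolding F_def by blast
  qed
  then obtain R where R: "\<And>k. density_matrix d (R k)" and Rf: "\<And>k. M - 1 / (real k + 1) < f (R k)"
    by metis
  have RM: "f (R k) \<le> M" for k unfolding M_def F_def by (rule cSup_upper) (use R Fbdd[unfolded F_def] in auto)
  have "\<exists>r. strict_mono r \<and> (\<forall>p\<in>{..<d} \<times> {..<d}. convergent (\<lambda>k. (\<lambda>(a,b). R (r k) $$ (a,b)) p))"
  proof (rule subseq_conv[where B = 1])
    show "finite ({..<d} \<times> {..<d})" by simp
    fix k p assume "p \<in> {..<d} \<times> {..<d}"
    then show "norm ((\<lambda>(a,b). R k $$ (a,b)) p) \<le> 1" using density_entry_bound[OF R] by auto
  qed
  then obtain r where r: "strict_mono r" and rc: "\<And>a b. a < d \<Longrightarrow> b < d \<Longrightarrow> convergent (\<lambda>k. R (r k) $$ (a,b))"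
    by fastforce
  define L where "L a b = lim (\<lambda>k. R (r k) $$ (a,b))" for a b
  have conv: "(\<lambda>k. R (r k) $$ (a,b)) \<longlonglongrightarrow> L a b" if "a < d" "b < d" for a b
    unfolding L_def using rc[OF that] by (simp add: convergent_LIMSEQ_iff)
  define \<rho>0 where "\<rho>0 = mat d d (\<lambda>(a,b). L a b)"
  have \<rho>0: "density_matrix d \<rho>0" unfolding \<rho>0_def by (rule density_limit[OF R conv])
  have Rc: "R (r k) \<in> carrier_mat d d" for k using density_parts(1)[OF R] .
  have flim: "(\<lambda>k. f (R (r k))) \<longlonglongrightarrow> f \<rho>0"
    unfolding f_def \<rho>0_def
    by (intro tendsto_sum tendsto_mult tendsto_const tendsto_power expect_limit[OF Rc herm_carrier[OF Ph] conv])
  have "(\<lambda>k. f (R (r k))) \<longlonglongrightarrow> M"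
  proof (rule tendsto_sandwich[of "\<lambda>k. M - 1 / (real k + 1)" _ _ "\<lambda>k. M"])
    show "\<forall>\<^sub>F k in sequentially. M - 1 / (real k + 1) \<le> f (R (r k))"
    proof (rule always_eventually, rule allI)
      fix k
      have "k \<le> r k" using seq_suble[OF r] .
      then have "1 / (real (r k) + 1) \<le> 1 / (real k + 1)" by (simp add: frac_le)
      then show "M - 1 / (real k + 1) \<le> f (R (r k))" using Rf[of "r k"] by linarith
    qed
    show "\<forall>\<^sub>F k in sequentially. f (R (r k)) \<le> M" using RM by simp
    have "(\<lambda>k. 1 / (real k + 1)) \<longlonglongrightarrow> 0"
      using LIMSEQ_inverse_real_of_nat by (simp add: inverse_eq_divide add.commute)
    then show "(\<lambda>k. M - 1 / (real k + 1)) \<longlonglongrightarrow> M" using tendsto_diff[OF tendsto_const, of _ 0 sequentially M] by simp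
    show "(\<lambda>k. M) \<longlonglongrightarrow> M" by simp
  qed
  then have fM: "f \<rho>0 = M" using flim LIMSEQ_unique by blast
  have "\<forall>\<rho>. density_matrix d \<rho> \<longrightarrow> f \<rho> \<le> f \<rho>0"
  proof (intro allI impI)
    fix \<rho> assume "density_matrix d \<rho>"
    then have "f \<rho> \<in> F" unfolding F_def by blast
    then show "f \<rho> \<le> f \<rho>0" unfolding fM M_def by (rule cSup_upper[OF _ Fbdd])
  qed
  then show ?thesis using \<rho>0 unfolding f_def by blast
qed


lemma BETA_eq:
  fixes S S' :: "'n::finite \<Rightarrow> pauli list"
  assumes "realization G S" "realization G S'"
  shows "BETA_of S = BETA_of S'"
proof -
  have "convex hull (down_closure (Qset S)) \<subseteq> convex hull (down_closure (Qset S'))"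
    by (rule hull_minimal[OF transfer[OF assms]]) (rule convex_convex_hull)
  moreover have "convex hull (down_closure (Qset S')) \<subseteq> convex hull (down_closure (Qset S))"
    by (rule hull_minimal[OF transfer[OF assms(2,1)]]) (rule convex_convex_hull)
  ultimately show ?thesis unfolding BETA_of_def by simp
qed

lemma halfspace_convex: "convex {u :: real ^ 'n. (\<Sum>i\<in>UNIV. w $ i * u $ i) \<le> c}"
proof -
  have "{u :: real ^ 'n. (\<Sum>i\<in>UNIV. w $ i * u $ i) \<le> c} = {u. inner w u \<le> c}"
    by (simp add: inner_vec_def)
  then show ?thesis using convex_halfspace_le by simp
qed

theorem proposition1:
  fixes G :: "'n::finite \<Rightarrow> 'n \<Rightarrow> bool"
    and S S' :: "'n \<Rightarrow> pauli list"
  assumes "simple_graph G"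
    and "realization G S"
    and "realization G S'"
  shows "BETA_of S = BETA_of S'
         \<and> (\<forall>w \<in> nonneg_orthant.
              \<exists>v \<in> BETA_of S.
                beta_num G w = (\<Sum>i\<in>UNIV. w $ i * v $ i)
                \<and> (\<forall>u \<in> BETA_of S. (\<Sum>i\<in>UNIV. w $ i * u $ i) \<le> (\<Sum>i\<in>UNIV. w $ i * v $ i)))"
proof (intro conjI ballI)
  show "BETA_of S = BETA_of S'" by (rule BETA_eq[OF assms(2,3)])
next
  fix w :: "real ^ 'n" assume "w \<in> nonneg_orthant"
  then have w0: "\<And>i. w $ i \<ge> 0" unfolding nonneg_orthant_def by blast
  define S0 where "S0 = (SOME S. realization G S)"
  have RS0: "realization G S0" unfolding S0_def using assms(2) by (rule someI[of "realization G"])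
  have BE: "BETA_of S = BETA_of S0" by (rule BETA_eq[OF assms(2) RS0])
  obtain l where l: "\<And>i. length (S0 i) = l" using realization_len[OF RS0] by blast
  define d where "d = (2::nat)^l"
  define P where "P i = pauli_string_mat (S0 i)" for i
  have Ph: "herm d (P i)" for i unfolding P_def d_def using psm_herm'[of "S0 i"] l by simp
  have PP: "P i * P i = 1\<^sub>m d" for i unfolding P_def d_def using psm_sq[of "S0 i"] l by simp
  have dens: "(\<forall>i. density_matrix (2 ^ length (S0 i)) \<rho>) = density_matrix d \<rho>" for \<rho>
    unfolding d_def using l by simp
  obtain \<rho>0 where \<rho>0: "density_matrix d \<rho>0"
    and mx: "\<And>\<rho>. density_matrix d \<rho> \<Longrightarrow> (\<Sum>i\<in>UNIV. w $ i * (expect \<rho> (P i))\<^sup>2) \<le> (\<Sum>i\<in>UNIV. w $ i * (expect \<rho>0 (P i))\<^sup>2)"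
  proof -
    have "\<exists>\<rho>0. density_matrix d \<rho>0 \<and> (\<forall>\<rho>. density_matrix d \<rho> \<longrightarrow> (\<Sum>i\<in>UNIV. w $ i * (expect \<rho> (P i))\<^sup>2) \<le> (\<Sum>i\<in>UNIV. w $ i * (expect \<rho>0 (P i))\<^sup>2))"
      by (rule attain[of d P w]) (use Ph PP in \<open>auto simp: d_def\<close>)
    then show ?thesis using that by blast
  qed
  define v where "v = (\<chi> i. (expect \<rho>0 (P i))\<^sup>2)"
  have vQ: "v \<in> Qset S0" unfolding Qset_def v_def P_def using \<rho>0 dens by auto
  have vB: "v \<in> BETA_of S0"
    unfolding BETA_of_def
  proof
    have "v \<in> down_closure (Qset S0)" unfolding down_closure_def using vQ by auto
    then show "v \<in> convex hull (down_closure (Qset S0))" by (rule hull_inc)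
    show "v \<in> nonneg_orthant" unfolding nonneg_orthant_def v_def by simp
  qed
  have wv: "(\<Sum>i\<in>UNIV. w $ i * v $ i) = (\<Sum>i\<in>UNIV. w $ i * (expect \<rho>0 (P i))\<^sup>2)" unfolding v_def by simp
  have beta: "beta_num G w = (\<Sum>i\<in>UNIV. w $ i * v $ i)"
  proof -
    have "beta_num G w = Sup {\<Sum>i\<in>UNIV. w $ i * (expect \<rho> (P i))\<^sup>2 | \<rho>. density_matrix d \<rho>}"
      unfolding beta_num_def Let_def S0_def[symmetric] P_def dens ..
    also have "\<dots> = (\<Sum>i\<in>UNIV. w $ i * (expect \<rho>0 (P i))\<^sup>2)"
      by (rule cSup_eq_maximum) (use \<rho>0 mx in auto)
    finally show ?thesis unfolding wv .
  qed
  have H: "convex hull (down_closure (Qset S0)) \<subseteq> {u. (\<Sum>i\<in>UNIV. w $ i * u $ i) \<le> (\<Sum>i\<in>UNIV. w $ i * v $ i)}"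
  proof (rule hull_minimal)
    show "convex {u. (\<Sum>i\<in>UNIV. w $ i * u $ i) \<le> (\<Sum>i\<in>UNIV. w $ i * v $ i)}" by (rule halfspace_convex)
    show "down_closure (Qset S0) \<subseteq> {u. (\<Sum>i\<in>UNIV. w $ i * u $ i) \<le> (\<Sum>i\<in>UNIV. w $ i * v $ i)}"
    proof
      fix u assume "u \<in> down_closure (Qset S0)"
      then obtain y \<rho> where uy: "\<And>i. u $ i \<le> y $ i" and \<rho>: "\<And>i. density_matrix (2 ^ length (S0 i)) \<rho>"
        and y: "\<And>i. y $ i = (expect \<rho> (pauli_string_mat (S0 i)))\<^sup>2"
        unfolding down_closure_def Qset_def by blast
      have \<rho>d: "density_matrix d \<rho>" using dens \<rho> by blast
      have "(\<Sum>i\<in>UNIV. w $ i * u $ i) \<le> (\<Sum>i\<in>UNIV. w $ i * y $ i)"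
        by (rule sum_mono) (use w0 uy in \<open>simp add: mult_left_mono\<close>)
      also have "\<dots> = (\<Sum>i\<in>UNIV. w $ i * (expect \<rho> (P i))\<^sup>2)" unfolding y P_def ..
      also have "\<dots> \<le> (\<Sum>i\<in>UNIV. w $ i * v $ i)" unfolding wv by (rule mx[OF \<rho>d])
      finally show "u \<in> {u. (\<Sum>i\<in>UNIV. w $ i * u $ i) \<le> (\<Sum>i\<in>UNIV. w $ i * v $ i)}" by simp
    qed
  qed
  show "\<exists>v \<in> BETA_of S. beta_num G w = (\<Sum>i\<in>UNIV. w $ i * v $ i)
                \<and> (\<forall>u \<in> BETA_of S. (\<Sum>i\<in>UNIV. w $ i * u $ i) \<le> (\<Sum>i\<in>UNIV. w $ i * v $ i))"
    unfolding BE
  proof (intro bexI conjI ballI)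
    show "beta_num G w = (\<Sum>i\<in>UNIV. w $ i * v $ i)" by (rule beta)
    show "v \<in> BETA_of S0" by (rule vB)
    fix u assume "u \<in> BETA_of S0"
    then have "u \<in> convex hull (down_closure (Qset S0))" unfolding BETA_of_def by blast
    then show "(\<Sum>i\<in>UNIV. w $ i * u $ i) \<le> (\<Sum>i\<in>UNIV. w $ i * v $ i)" using H by blast
  qed
qed


end
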